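(* For every Følner sequence $\Phi$ on $\mathbb{N}$ and any $f\in L^2(\mathbb{N},\Phi)$ there are a subsequence $\Psi$ of $\Phi$ and functions $f_{\mathsf{Bes}}\in\mathsf{Bes}(\mathbb{N},\Psi)$ and $f_{\mathsf{anti}}\in\mathsf{Bes}(\mathbb{N},\Psi)^\perp$ such that $f=f_{\mathsf{Bes}}+f_{\mathsf{anti}}$. Moreover, $\|f-f_{\mathsf{Bes}}\|_\Psi=\inf\{\|f-g\|_\Psi: g\in\mathsf{Bes}(\mathbb{N},\Psi)\}$, and if $f$ takes values in an interval $[a,b]$, then so does $f_{\mathsf{Bes}}$.
   Context: A Følner sequence in $\mathbb{N}$ is a sequence $\Phi\colon N\mapsto\Phi_N$ of finite non-empty subsets of $\mathbb{N}$ with $|(\Phi_N+m)\triangle\Phi_N|/|\Phi_N|\to0$ for all $m\in\mathbb{N}$. $\|f\|_\Phi=\big(\limsup_{N\to\infty}\frac{1}{|\Phi_N|}\sum_{n\in\Phi_N}|f(n)|^2\big)^{1/2}$ and $L^2(\mathbb{N},\Phi)=\{f\colon\mathbb{N}\to\mathbb{C}:\|f\|_\Phi<\infty\}$. A trigonometric polynomial is a function $n\mapsto\sum_{j=1}^J c_je^{2\pi i\theta_j n}$ with $c_j\in\mathbb{C}$, $\theta_j\in[0,1)$. $\mathsf{Bes}(\mathbb{N},\Phi)$ is the set of $f\colon\mathbb{N}\to\mathbb{C}$ such that for every $\epsilon>0$ there is a trigonometric polynomial $a$ with $\|f-a\|_\Phi<\epsilon$. $\mathsf{Bes}(\mathbb{N},\Phi)^\perp$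 is the set of $f\in L^2(\mathbb{N},\Phi)$ such that $\lim_{N\to\infty}\frac{1}{|\Phi_N|}\sum_{n\in\Phi_N}f(n)e^{2\pi i n\theta}=0$ for all $\theta\in[0,1)$. *)

theory Defs
  imports "HOL-Analysis.Analysis" "HOL-Library.Liminf_Limsup"
begin

definition foelner :: "(nat \<Rightarrow> nat set) \<Rightarrow> bool" where
  "foelner \<Phi> \<longleftrightarrow> (\<forall>N. finite (\<Phi> N) \<and> \<Phi> N \<noteq> {}) \<and>
     (\<forall>m::nat. (\<lambda>N. real (card (((\<lambda>n. n + m) ` \<Phi> N) - \<Phi> N \<union> (\<Phi> N - (\<lambda>n. n + m) ` \<Phi> N)))
                    / real (card (\<Phi> N))) \<longlonglongrightarrow> 0)"

definition favg :: "(nat \<Rightarrow> nat set) \<Rightarrow> (nat \<Rightarrow> 'a::real_normed_field) \<Rightarrow> nat \<Rightarrow> 'a" where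
  "favg \<Phi> g N = (\<Sum>n\<in>\<Phi> N. g n) / of_nat (card (\<Phi> N))"

definition sqnorm :: "(nat \<Rightarrow> nat set) \<Rightarrow> (nat \<Rightarrow> complex) \<Rightarrow> ereal" where
  "sqnorm \<Phi> f = limsup (\<lambda>N. ereal (favg \<Phi> (\<lambda>n. (cmod (f n))\<^sup>2) N))"

text \<open>The seminorm itself (meaningful for f in L2).\<close>
definition snorm :: "(nat \<Rightarrow> nat set) \<Rightarrow> (nat \<Rightarrow> complex) \<Rightarrow> real" where
  "snorm \<Phi> f = sqrt (real_of_ereal (sqnorm \<Phi> f))"

definition L2 :: "(nat \<Rightarrow> nat set) \<Rightarrow> (nat \<Rightarrow> complex) set" where
  "L2 \<Phi> = {f. sqnorm \<Phi> f < \<infinity>}"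

definition trig_poly :: "(nat \<Rightarrow> complex) \<Rightarrow> bool" where
  "trig_poly a \<longleftrightarrow> (\<exists>J::nat. \<exists>c::nat \<Rightarrow> complex. \<exists>\<theta>::nat \<Rightarrow> real.
      (\<forall>j. 0 \<le> \<theta> j \<and> \<theta> j < 1) \<and>
      a = (\<lambda>n. \<Sum>j\<in>{1..J}. c j * exp (2 * of_real pi * \<i> * of_real (\<theta> j) * of_nat n)))"

definition Bes :: "(nat \<Rightarrow> nat set) \<Rightarrow> (nat \<Rightarrow> complex) set" where
  "Bes \<Phi> = {f. \<forall>\<epsilon>>0. \<exists>a. trig_poly a \<and> sqnorm \<Phi> (\<lambda>n. f n - a n) < ereal (\<epsilon>\<^sup>2)}"

definition Bes_perp :: "(nat \<Rightarrow> nat set) \<Rightarrow> (nat \<Rightarrow> complex) set" where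
  "Bes_perp \<Phi> = {f \<in> L2 \<Phi>. \<forall>\<theta>::real. 0 \<le> \<theta> \<and> \<theta> < 1 \<longrightarrow>
      (\<lambda>N. favg \<Phi> (\<lambda>n. f n * exp (2 * of_real pi * \<i> * of_nat n * of_real \<theta>)) N) \<longlonglongrightarrow> 0}"

end

theory Submission
  imports Defs "HOL-Library.Infinite_Set"
begin

definition chr :: "real \<Rightarrow> nat \<Rightarrow> complex" where
  "chr a n = exp (2 * of_real pi * \<i> * of_real a * of_nat n)"

lemma chr_mult: "chr a n * chr b n = chr (a+b) n"
  unfolding chr_def by (simp add: exp_add[symmetric] algebra_simps)

lemma cnj_chr: "cnj (chr a n) = chr (-a) n"
  unfolding chr_def by (simp add: exp_cnj)

lemma norm_chr[simp]: "norm (chr a n) = 1"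
  unfolding chr_def by simp

lemma chr_zero[simp]: "chr 0 n = 1"
  unfolding chr_def by simp

lemma chr_int: "chr (of_int k) n = 1"
proof -
  have "chr (of_int k) n = exp ((2 * of_real (real_of_int (k * int n)) * pi) * \<i>)"
    unfolding chr_def by (simp add: algebra_simps)
  also have "\<dots> = 1" by (rule exp_integer_2pi) simp
  finally show ?thesis .
qed

lemma chr_frac: "chr (frac a) n = chr a n"
proof -
  have "chr a n = chr (frac a + of_int \<lfloor>a\<rfloor>) n" by (simp add: frac_def)
  also have "\<dots> = chr (frac a) n * chr (of_int \<lfloor>a\<rfloor>) n" by (simp add: chr_mult)
  finally show ?thesis by (simp add: chr_int)
qed

lemma chr_shift: "chr a (n + m) = chr a n * chr a m"
  unfolding chr_def by (simp add: exp_add[symmetric] algebra_simps)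

lemma chr_1_eq_1: "chr a 1 = 1 \<Longrightarrow> a \<in> \<int>"
proof -
  assume "chr a 1 = 1"
  then have "exp (2 * of_real pi * \<i> * of_real a) = 1" by (simp add: chr_def)
  then obtain k :: int where "2 * pi * a = of_int (2*k) * pi" by (auto simp: exp_eq_1)
  then have "a = of_int k" by simp
  then show ?thesis by simp
qed

lemma trig_poly_alt: "trig_poly a \<longleftrightarrow> (\<exists>J::nat. \<exists>c::nat \<Rightarrow> complex. \<exists>\<theta>::nat \<Rightarrow> real.
      (\<forall>j. 0 \<le> \<theta> j \<and> \<theta> j < 1) \<and> a = (\<lambda>n. \<Sum>j\<in>{1..J}. c j * chr (\<theta> j) n))"
  unfolding trig_poly_def chr_def by simp

lemma trig_poly_finite_sum:
  fixes S :: "'i set"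
  assumes "finite S"
  shows "trig_poly (\<lambda>n. \<Sum>x\<in>S. c x * chr (\<theta> x) n)"
proof -
  obtain h where h: "bij_betw h {1..card S} S" using ex_bij_betw_nat_finite_1[OF assms] by blast
  have "(\<Sum>x\<in>S. c x * chr (\<theta> x) n) = (\<Sum>j\<in>{1..card S}. c (h j) * chr (frac (\<theta> (h j))) n)" for n
    using sum.reindex_bij_betw[OF h, of "\<lambda>x. c x * chr (\<theta> x) n"] by (simp only: chr_frac)
  then have eq: "(\<lambda>n. \<Sum>x\<in>S. c x * chr (\<theta> x) n) = (\<lambda>n. \<Sum>j\<in>{1..card S}. c (h j) * chr (frac (\<theta> (h j))) n)"
    by (rule ext)
  have rng: "\<forall>j. 0 \<le> frac (\<theta> (h j)) \<and> frac (\<theta> (h j)) < 1" by (simp add: frac_lt_1)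
  show ?thesis unfolding trig_poly_alt
    by (rule exI[of _ "card S"], rule exI[of _ "\<lambda>j. c (h j)"], rule exI[of _ "\<lambda>j. frac (\<theta> (h j))"])
       (use eq rng in simp)
qed

lemma trig_polyE:
  assumes "trig_poly a"
  obtains S :: "nat set" and c \<theta> where "finite S" "a = (\<lambda>n. \<Sum>x\<in>S. c x * chr (\<theta> x) n)"
  using assms unfolding trig_poly_alt by blast

lemma trig_poly_const: "trig_poly (\<lambda>n. c)"
  using trig_poly_finite_sum[of "{0::nat}" "\<lambda>_. c" "\<lambda>_. 0"] by simp

lemma trig_poly_chr: "trig_poly (chr t)"
  using trig_poly_finite_sum[of "{0::nat}" "\<lambda>_. 1" "\<lambda>_. t"] by simp

lemma trig_poly_add:
  assumes "trig_poly a" "trig_poly b"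
  shows "trig_poly (\<lambda>n. a n + b n)"
proof -
  obtain S1 :: "nat set" and c1 t1 where 1: "finite S1" "a = (\<lambda>n. \<Sum>x\<in>S1. c1 x * chr (t1 x) n)"
    using trig_polyE[OF assms(1)] by metis
  obtain S2 :: "nat set" and c2 t2 where 2: "finite S2" "b = (\<lambda>n. \<Sum>x\<in>S2. c2 x * chr (t2 x) n)"
    using trig_polyE[OF assms(2)] by metis
  let ?c = "case_sum c1 c2" and ?t = "case_sum t1 t2"
  have "(\<lambda>n. a n + b n) = (\<lambda>n. \<Sum>x\<in>S1 <+> S2. ?c x * chr (?t x) n)"
    using 1 2 by (simp add: sum.Plus o_def)
  then show ?thesis using trig_poly_finite_sum[of "S1 <+> S2" ?c ?t] 1 2 by simp
qed

lemma trig_poly_mult: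
  assumes "trig_poly a" "trig_poly b"
  shows "trig_poly (\<lambda>n. a n * b n)"
proof -
  obtain S1 :: "nat set" and c1 t1 where 1: "finite S1" "a = (\<lambda>n. \<Sum>x\<in>S1. c1 x * chr (t1 x) n)"
    using trig_polyE[OF assms(1)] by metis
  obtain S2 :: "nat set" and c2 t2 where 2: "finite S2" "b = (\<lambda>n. \<Sum>x\<in>S2. c2 x * chr (t2 x) n)"
    using trig_polyE[OF assms(2)] by metis
  let ?c = "\<lambda>(i,j). c1 i * c2 j" and ?t = "\<lambda>(i,j). t1 i + t2 j"
  have "a n * b n = (\<Sum>x\<in>S1 \<times> S2. ?c x * chr (?t x) n)" for n
    unfolding 1 2 sum_product sum.cartesian_product
    by (rule sum.cong) (auto simp: chr_mult[symmetric] mult_ac)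
  then have "(\<lambda>n. a n * b n) = (\<lambda>n. \<Sum>x\<in>S1 \<times> S2. ?c x * chr (?t x) n)" by blast
  then show ?thesis using trig_poly_finite_sum[of "S1 \<times> S2" ?c ?t] 1 2 by simp
qed

lemma trig_poly_cnj:
  assumes "trig_poly a"
  shows "trig_poly (\<lambda>n. cnj (a n))"
proof -
  obtain S1 :: "nat set" and c1 t1 where 1: "finite S1" "a = (\<lambda>n. \<Sum>x\<in>S1. c1 x * chr (t1 x) n)"
    using trig_polyE[OF assms(1)] by metis
  have "(\<lambda>n. cnj (a n)) = (\<lambda>n. \<Sum>x\<in>S1. cnj (c1 x) * chr (- t1 x) n)"
    using 1 by (simp add: cnj_chr)
  then show ?thesis using trig_poly_finite_sum[of S1] 1 by simp
qed

lemma trig_poly_cmult: "trig_poly a \<Longrightarrow> trig_poly (\<lambda>n. c * a n)"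
  using trig_poly_mult[OF trig_poly_const] by blast

lemma trig_poly_diff: "trig_poly a \<Longrightarrow> trig_poly b \<Longrightarrow> trig_poly (\<lambda>n. a n - b n)"
  using trig_poly_add[of a "\<lambda>n. (-1) * b n"] trig_poly_cmult[of b "-1"] by simp

lemma trig_poly_bounded:
  assumes "trig_poly a"
  obtains M where "\<And>n. norm (a n) \<le> M"
proof -
  obtain S1 :: "nat set" and c1 t1 where 1: "finite S1" "a = (\<lambda>n. \<Sum>x\<in>S1. c1 x * chr (t1 x) n)"
    using trig_polyE[OF assms(1)] by metis
  have "norm (a n) \<le> (\<Sum>x\<in>S1. norm (c1 x))" for n
    unfolding 1 by (rule order.trans[OF norm_sum]) (simp add: norm_mult)
  then show ?thesis using that by blast
qed

lemma trig_poly_Re: "trig_poly a \<Longrightarrow> trig_poly (\<lambda>n. of_real (Re (a n)))"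
  using trig_poly_cmult[OF trig_poly_add[OF _ trig_poly_cnj], of a a "1/2"]
  by (simp add: complex_add_cnj)

lemma trig_poly_Im: "trig_poly a \<Longrightarrow> trig_poly (\<lambda>n. of_real (Im (a n)))"
proof -
  assume a: "trig_poly a"
  have "(\<lambda>n. of_real (Im (a n))) = (\<lambda>n. (-\<i>/2) * (a n - cnj (a n)))"
    by (rule ext) (simp add: complex_diff_cnj field_simps)
  then show ?thesis using trig_poly_cmult[OF trig_poly_diff[OF a trig_poly_cnj[OF a]], of "-\<i>/2"] by simp
qed

definition fne :: "(nat \<Rightarrow> nat set) \<Rightarrow> bool" where
  "fne \<Phi> \<longleftrightarrow> (\<forall>N. finite (\<Phi> N) \<and> \<Phi> N \<noteq> {})"

lemma foelner_fne: "foelner \<Phi> \<Longrightarrow> fne \<Phi>"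
  unfolding foelner_def fne_def by blast

lemma fne_comp: "fne \<Phi> \<Longrightarrow> fne (\<Phi> \<circ> \<sigma>)"
  unfolding fne_def by simp

lemma fne_card: "fne \<Phi> \<Longrightarrow> card (\<Phi> N) > 0"
  unfolding fne_def by (simp add: card_gt_0_iff)

lemma fne_finite: "fne \<Phi> \<Longrightarrow> finite (\<Phi> N)"
  unfolding fne_def by simp

lemma foelner_comp:
  assumes "foelner \<Phi>" "strict_mono \<sigma>"
  shows "foelner (\<Phi> \<circ> \<sigma>)"
proof -
  have "(\<lambda>N. real (card (((\<lambda>n. n + m) ` \<Phi> N) - \<Phi> N \<union> (\<Phi> N - (\<lambda>n. n + m) ` \<Phi> N)))
                    / real (card (\<Phi> N))) \<longlonglongrightarrow> 0" for m
    using assms(1) unfolding foelner_def by blast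
  from LIMSEQ_subseq_LIMSEQ[OF this assms(2)] show ?thesis
    using assms(1) unfolding foelner_def by (simp add: o_def)
qed

lemma favg_comp: "favg (\<Phi> \<circ> \<sigma>) g N = favg \<Phi> g (\<sigma> N)"
  unfolding favg_def by simp

lemma favg_add: "favg \<Phi> (\<lambda>n. g n + h n) N = favg \<Phi> g N + favg \<Phi> h N"
  unfolding favg_def by (simp add: sum.distrib add_divide_distrib)

lemma favg_diff: "favg \<Phi> (\<lambda>n. g n - h n) N = favg \<Phi> g N - favg \<Phi> h N"
  unfolding favg_def by (simp add: sum_subtractf diff_divide_distrib)

lemma favg_cmult: "favg \<Phi> (\<lambda>n. c * g n) N = c * favg \<Phi> g N"
  unfolding favg_def by (simp add: sum_distrib_left)

lemma favg_multc: "favg \<Phi> (\<lambda>n. g n * c) N = favg \<Phi> g N * c"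
  unfolding favg_def by (simp add: sum_distrib_right)

lemma favg_sum: "favg \<Phi> (\<lambda>n. \<Sum>i\<in>I. g i n) N = (\<Sum>i\<in>I. favg \<Phi> (g i) N)"
  unfolding favg_def by (simp add: sum.swap[of _ I] sum_divide_distrib)

lemma favg_const: "fne \<Phi> \<Longrightarrow> favg \<Phi> (\<lambda>n. c) N = c"
  unfolding favg_def using fne_card[of \<Phi> N] by simp

lemma favg_cnj: "cnj (favg \<Phi> g N) = favg \<Phi> (\<lambda>n. cnj (g n)) N"
  unfolding favg_def by simp

lemma favg_of_real: "favg \<Phi> (\<lambda>n. of_real (g n)) N = (of_real (favg \<Phi> g N) :: complex)"
  unfolding favg_def by simp

lemma favg_Re: "Re (favg \<Phi> g N) = favg \<Phi> (\<lambda>n. Re (g n)) N"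
  unfolding favg_def by (simp add: Re_divide_of_nat)

lemma favg_mono:
  fixes g h :: "nat \<Rightarrow> real"
  assumes "\<And>n. n \<in> \<Phi> N \<Longrightarrow> g n \<le> h n"
  shows "favg \<Phi> g N \<le> favg \<Phi> h N"
  unfolding favg_def by (rule divide_right_mono) (auto intro: sum_mono assms)

lemma favg_nonneg:
  fixes g :: "nat \<Rightarrow> real"
  assumes "\<And>n. n \<in> \<Phi> N \<Longrightarrow> 0 \<le> g n"
  shows "0 \<le> favg \<Phi> g N"
  unfolding favg_def by (auto intro!: divide_nonneg_nonneg sum_nonneg assms)

lemma norm_favg: "norm (favg \<Phi> (g :: nat \<Rightarrow> complex) N) \<le> favg \<Phi> (\<lambda>n. norm (g n)) N"
  unfolding favg_def by (simp add: norm_divide divide_right_mono norm_sum)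

lemma sq_nonneg_favg: "0 \<le> favg \<Phi> (\<lambda>n. (cmod (g n))\<^sup>2) N"
  by (rule favg_nonneg) simp

lemma sqnorm_nonneg: "0 \<le> sqnorm \<Phi> g"
  unfolding sqnorm_def by (rule le_Limsup) (auto intro!: always_eventually sq_nonneg_favg)

lemma sqnorm_le:
  assumes "eventually (\<lambda>N. favg \<Phi> (\<lambda>n. (cmod (g n))\<^sup>2) N \<le> r) sequentially"
  shows "sqnorm \<Phi> g \<le> ereal r"
  unfolding sqnorm_def by (rule Limsup_bounded) (use assms in \<open>auto elim: eventually_mono\<close>)

lemma sqnorm_lessD:
  assumes "sqnorm \<Phi> g < ereal r"
  shows "eventually (\<lambda>N. favg \<Phi> (\<lambda>n. (cmod (g n))\<^sup>2) N < r) sequentially"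
  using Limsup_lessD[OF assms[unfolded sqnorm_def]] by simp

lemma sqnorm_subseq:
  assumes "strict_mono \<sigma>"
  shows "sqnorm (\<Phi> \<circ> \<sigma>) g \<le> sqnorm \<Phi> g"
proof -
  have "(\<lambda>N. ereal (favg (\<Phi> \<circ> \<sigma>) (\<lambda>n. (cmod (g n))\<^sup>2) N)) = (\<lambda>N. ereal (favg \<Phi> (\<lambda>n. (cmod (g n))\<^sup>2) N)) \<circ> \<sigma>"
    by (rule ext) (simp add: favg_def)
  then show ?thesis unfolding sqnorm_def using limsup_subseq_mono[OF assms] by metis
qed

lemma L2_subseq: "strict_mono \<sigma> \<Longrightarrow> g \<in> L2 \<Phi> \<Longrightarrow> g \<in> L2 (\<Phi> \<circ> \<sigma>)"
  unfolding L2_def using sqnorm_subseq[of \<sigma> \<Phi> g] by auto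

lemma L2_I: "sqnorm \<Phi> g \<le> ereal r \<Longrightarrow> g \<in> L2 \<Phi>"
  unfolding L2_def using le_less_trans[OF _ ereal_less_PInfty[of r]] by simp

lemma L2_ev_bound:
  assumes "g \<in> L2 \<Phi>"
  obtains r where "eventually (\<lambda>N. favg \<Phi> (\<lambda>n. (cmod (g n))\<^sup>2) N < r) sequentially"
proof -
  have "sqnorm \<Phi> g < \<infinity>" using assms unfolding L2_def by simp
  moreover have "sqnorm \<Phi> g \<noteq> - \<infinity>" using sqnorm_nonneg[of \<Phi> g] by auto
  ultimately obtain s where s: "sqnorm \<Phi> g = ereal s" by (cases "sqnorm \<Phi> g") auto
  then have "sqnorm \<Phi> g < ereal (s+1)" by simp
  from sqnorm_lessD[OF this] that show ?thesis by blast
qed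

lemma L2_bound:
  assumes "g \<in> L2 \<Phi>"
  obtains B where "\<And>N. favg \<Phi> (\<lambda>n. (cmod (g n))\<^sup>2) N \<le> B"
proof -
  obtain r where "eventually (\<lambda>N. favg \<Phi> (\<lambda>n. (cmod (g n))\<^sup>2) N < r) sequentially"
    using L2_ev_bound[OF assms] by blast
  then obtain N0 where N0: "\<And>N. N \<ge> N0 \<Longrightarrow> favg \<Phi> (\<lambda>n. (cmod (g n))\<^sup>2) N < r"
    unfolding eventually_sequentially by blast
  let ?B = "r + (\<Sum>N<N0. favg \<Phi> (\<lambda>n. (cmod (g n))\<^sup>2) N)"
  have "favg \<Phi> (\<lambda>n. (cmod (g n))\<^sup>2) N \<le> ?B" for N
  proof (cases "N < N0")
    case True
    have "favg \<Phi> (\<lambda>n. (cmod (g n))\<^sup>2) N \<le> (\<Sum>N<N0. favg \<Phi> (\<lambda>n. (cmod (g n))\<^sup>2) N)"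
      by (rule member_le_sum) (use True sq_nonneg_favg in auto)
    moreover have "0 \<le> r" using N0[of N0] sq_nonneg_favg[of \<Phi> g N0] by simp
    ultimately show ?thesis by simp
  next
    case False
    then have "favg \<Phi> (\<lambda>n. (cmod (g n))\<^sup>2) N < r" using N0 by simp
    moreover have "0 \<le> (\<Sum>N<N0. favg \<Phi> (\<lambda>n. (cmod (g n))\<^sup>2) N)"
      by (rule sum_nonneg) (use sq_nonneg_favg in auto)
    ultimately show ?thesis by simp
  qed
  then show ?thesis using that by blast
qed

lemma sqnorm_zero_tendsto:
  assumes "sqnorm \<Phi> g = 0"
  shows "(\<lambda>N. favg \<Phi> (\<lambda>n. (cmod (g n))\<^sup>2) N) \<longlonglongrightarrow> 0"
proof (rule order_tendstoI)
  fix a :: real assume "a < 0"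
  then show "eventually (\<lambda>N. a < favg \<Phi> (\<lambda>n. (cmod (g n))\<^sup>2) N) sequentially"
    using sq_nonneg_favg[of \<Phi> g] by (intro always_eventually allI) (auto intro: less_le_trans)
next
  fix a :: real assume "0 < a"
  then have "sqnorm \<Phi> g < ereal a" using assms by simp
  from sqnorm_lessD[OF this] show "eventually (\<lambda>N. favg \<Phi> (\<lambda>n. (cmod (g n))\<^sup>2) N < a) sequentially" .
qed

lemma tendsto_sqnorm_zero:
  assumes "(\<lambda>N. favg \<Phi> (\<lambda>n. (cmod (g n))\<^sup>2) N) \<longlonglongrightarrow> 0"
  shows "sqnorm \<Phi> g = 0"
proof -
  have "(\<lambda>N. ereal (favg \<Phi> (\<lambda>n. (cmod (g n))\<^sup>2) N)) \<longlonglongrightarrow> ereal 0"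
    using assms by (rule tendsto_ereal)
  from lim_imp_Limsup[OF _ this] show ?thesis unfolding sqnorm_def by (simp add: zero_ereal_def)
qed

lemma cs_pointwise:
  fixes x y :: complex and t :: real
  assumes "t > 0"
  shows "norm (x * cnj y) \<le> (t * (cmod x)\<^sup>2 + (cmod y)\<^sup>2 / t) / 2"
proof -
  have "0 \<le> (t * cmod x - cmod y)\<^sup>2 / t" using assms by simp
  also have "(t * cmod x - cmod y)\<^sup>2 / t = t * (cmod x)\<^sup>2 + (cmod y)\<^sup>2 / t - 2 * (cmod x * cmod y)"
    using assms by (simp add: power2_eq_square field_simps)
  finally show ?thesis by (simp add: norm_mult)
qed

lemma cs_avg:
  assumes "t > 0"
  shows "norm (favg \<Phi> (\<lambda>n. x n * cnj (y n)) N) \<le>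
    (t * favg \<Phi> (\<lambda>n. (cmod (x n))\<^sup>2) N + favg \<Phi> (\<lambda>n. (cmod (y n))\<^sup>2) N / t) / 2"
proof -
  have "norm (favg \<Phi> (\<lambda>n. x n * cnj (y n)) N) \<le> favg \<Phi> (\<lambda>n. norm (x n * cnj (y n))) N"
    by (rule norm_favg)
  also have "\<dots> \<le> favg \<Phi> (\<lambda>n. (1/2) * (t * (cmod (x n))\<^sup>2 + (1/t) * (cmod (y n))\<^sup>2)) N"
    by (rule favg_mono) (use cs_pointwise[OF assms] in simp)
  also have "\<dots> = (1/2) * (t * favg \<Phi> (\<lambda>n. (cmod (x n))\<^sup>2) N + (1/t) * favg \<Phi> (\<lambda>n. (cmod (y n))\<^sup>2) N)"
    by (simp only: favg_cmult favg_add)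
  also have "\<dots> = (t * favg \<Phi> (\<lambda>n. (cmod (x n))\<^sup>2) N + favg \<Phi> (\<lambda>n. (cmod (y n))\<^sup>2) N / t) / 2"
    by simp
  finally show ?thesis .
qed

definition symd :: "(nat \<Rightarrow> nat set) \<Rightarrow> nat \<Rightarrow> nat \<Rightarrow> real" where
  "symd \<Phi> m N = real (card (((\<lambda>n. n + m) ` \<Phi> N) - \<Phi> N \<union> (\<Phi> N - (\<lambda>n. n + m) ` \<Phi> N)))
                    / real (card (\<Phi> N))"

lemma foelner_symd: "foelner \<Phi> \<Longrightarrow> symd \<Phi> m \<longlonglongrightarrow> 0"
  unfolding foelner_def symd_def by blast

lemma sum_diff_bound:
  fixes g :: "nat \<Rightarrow> complex"
  assumes "finite A" "finite B" "\<And>n. norm (g n) \<le> 1"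
  shows "norm (sum g A - sum g B) \<le> real (card (A - B \<union> (B - A)))"
proof -
  have "sum g A = sum g (A \<inter> B) + sum g (A - B)" using assms(1) by (rule sum.Int_Diff)
  moreover have "sum g B = sum g (A \<inter> B) + sum g (B - A)"
    using sum.Int_Diff[OF assms(2), of g A] by (simp add: Int_commute)
  ultimately have "sum g A - sum g B = sum g (A - B) - sum g (B - A)" by simp
  then have "norm (sum g A - sum g B) \<le> norm (sum g (A - B)) + norm (sum g (B - A))"
    by (simp add: norm_triangle_ineq4)
  also have "norm (sum g (A - B)) \<le> real (card (A - B))"
    using sum_norm_le[of "A - B" g "\<lambda>_. 1"] assms by (simp add: norm_sum order_trans)
  also have "norm (sum g (B - A)) \<le> real (card (B - A))"
    using sum_norm_le[of "B - A" g "\<lambda>_. 1"] assms by (simp add: norm_sum order_trans)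
  also have "real (card (A - B)) + real (card (B - A)) = real (card (A - B \<union> (B - A)))"
    using assms by (subst card_Un_disjoint) auto
  finally show ?thesis by simp
qed

lemma avg_chr_tendsto:
  assumes F: "foelner \<Phi>" and a: "a \<notin> \<int>"
  shows "(\<lambda>N. favg \<Phi> (chr a) N) \<longlonglongrightarrow> 0"
proof -
  have fne: "fne \<Phi>" using F by (rule foelner_fne)
  define q where "q = chr a 1 - 1"
  have q: "q \<noteq> 0" using chr_1_eq_1[of a] a unfolding q_def by auto
  have bound: "norm (favg \<Phi> (chr a) N) \<le> symd \<Phi> 1 N / cmod q" for N
  proof -
    let ?A = "(\<lambda>n. n + 1) ` \<Phi> N" and ?B = "\<Phi> N"
    have fin: "finite ?B" using fne by (rule fne_finite)
    have "sum (chr a) ?A = (\<Sum>n\<in>?B. chr a (n + 1))"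
      by (subst sum.reindex) (auto simp: inj_on_def)
    also have "\<dots> = (\<Sum>n\<in>?B. chr a 1 * chr a n)"
    proof -
      have eq: "chr a (n + 1) = chr a 1 * chr a n" for n
        using chr_shift[of a n 1] by (simp only: mult.commute)
      show ?thesis by (simp only: eq)
    qed
    also have "\<dots> = chr a 1 * sum (chr a) ?B"
      by (rule sum_distrib_left[symmetric])
    finally have "q * sum (chr a) ?B = sum (chr a) ?A - sum (chr a) ?B"
      unfolding q_def by (simp add: algebra_simps)
    then have "norm (q * sum (chr a) ?B) \<le> real (card (?A - ?B \<union> (?B - ?A)))"
      using sum_diff_bound[of ?A ?B "chr a"] fin by simp
    then have "cmod q * norm (sum (chr a) ?B) / real (card ?B) \<le> symd \<Phi> 1 N"
      unfolding symd_def by (simp add: norm_mult divide_right_mono)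
    moreover have "norm (favg \<Phi> (chr a) N) = norm (sum (chr a) ?B) / real (card ?B)"
      unfolding favg_def by (simp add: norm_divide)
    ultimately show ?thesis using q by (simp add: field_simps)
  qed
  have "(\<lambda>N. symd \<Phi> 1 N / cmod q) \<longlonglongrightarrow> 0 / cmod q"
    by (intro tendsto_divide foelner_symd F tendsto_const) (use q in simp)
  then have lim0: "(\<lambda>N. symd \<Phi> 1 N / cmod q) \<longlonglongrightarrow> 0" by simp
  show ?thesis
    by (rule Lim_null_comparison[OF always_eventually lim0]) (use bound in blast)
qed

lemma card_shift_block:
  fixes P :: "nat set" and T i :: nat
  assumes "finite P"
  shows "card (P \<inter> {..<T}) \<le> card (P \<inter> {i*T..<(i+1)*T}) + card ((\<lambda>n. n + i*T) ` P - P)"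
proof -
  have "card (P \<inter> {..<T}) = card ((\<lambda>n. n + i*T) ` (P \<inter> {..<T}))"
    by (rule card_image[symmetric]) (auto simp: inj_on_def)
  also have "\<dots> \<le> card (P \<inter> {i*T..<(i+1)*T} \<union> ((\<lambda>n. n + i*T) ` P - P))"
    by (rule card_mono) (use assms in auto)
  also have "\<dots> \<le> card (P \<inter> {i*T..<(i+1)*T}) + card ((\<lambda>n. n + i*T) ` P - P)"
    by (rule card_Un_le)
  finally show ?thesis .
qed

lemma card_blocks:
  fixes P :: "nat set"
  assumes "finite P"
  shows "(\<Sum>i<J. card (P \<inter> {i*T..<(i+1)*T})) \<le> card P"
proof -
  have "(\<Sum>i<J. card (P \<inter> {i*T..<(i+1)*T})) = card (\<Union>i<J. P \<inter> {i*T..<(i+1)*T})"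
  proof (rule card_UN_disjoint[symmetric])
    show "\<forall>i\<in>{..<J}. \<forall>j\<in>{..<J}. i \<noteq> j \<longrightarrow> P \<inter> {i * T..<(i + 1) * T} \<inter> (P \<inter> {j * T..<(j + 1) * T}) = {}"
    proof (intro ballI impI)
      fix i j :: nat assume "i \<in> {..<J}" "j \<in> {..<J}" "i \<noteq> j"
      then have "i < j \<or> j < i" by arith
      then show "P \<inter> {i * T..<(i + 1) * T} \<inter> (P \<inter> {j * T..<(j + 1) * T}) = {}"
      proof
        assume "i < j" then have "(i+1)*T \<le> j * T" by (intro mult_right_mono) auto
        then show ?thesis by auto
      next
        assume "j < i" then have "(j+1)*T \<le> i * T" by (intro mult_right_mono) auto
        then show ?thesis by auto
      qed
    qed
  qed (use assms in auto)
  also have "\<dots> \<le> card P" by (rule card_mono) (use assms in auto)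
  finally show ?thesis .
qed

lemma proportion_tendsto:
  assumes F: "foelner \<Phi>"
  shows "(\<lambda>N. real (card (\<Phi> N \<inter> {..<T})) / real (card (\<Phi> N))) \<longlonglongrightarrow> 0"
proof -
  have fne: "fne \<Phi>" using F by (rule foelner_fne)
  have key: "real J * (real (card (\<Phi> N \<inter> {..<T})) / real (card (\<Phi> N)))
      \<le> 1 + (\<Sum>i<J. symd \<Phi> (i*T) N)" for J N
  proof -
    let ?P = "\<Phi> N"
    have fin: "finite ?P" using fne by (rule fne_finite)
    have cP: "real (card ?P) > 0" using fne_card[OF fne] by simp
    have "real J * real (card (?P \<inter> {..<T})) = (\<Sum>i<J. real (card (?P \<inter> {..<T})))" by simp
    also have "\<dots> \<le> (\<Sum>i<J. real (card (?P \<inter> {i*T..<(i+1)*T})) + real (card ((\<lambda>n. n + i*T) ` ?P - ?P)))"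
      by (rule sum_mono) (use card_shift_block[OF fin] in \<open>simp add: of_nat_add[symmetric] del: of_nat_add\<close>)
    also have "\<dots> = real (\<Sum>i<J. card (?P \<inter> {i*T..<(i+1)*T})) + (\<Sum>i<J. real (card ((\<lambda>n. n + i*T) ` ?P - ?P)))"
      by (simp add: sum.distrib)
    also have "\<dots> \<le> real (card ?P) + (\<Sum>i<J. real (card ((\<lambda>n. n + i*T) ` ?P - ?P)))"
      using card_blocks[OF fin, where J=J and T=T] by (simp only: of_nat_sum[symmetric] of_nat_le_iff)
    finally have 1: "real J * real (card (?P \<inter> {..<T})) \<le> real (card ?P) + (\<Sum>i<J. real (card ((\<lambda>n. n + i*T) ` ?P - ?P)))" .
    have 2: "real (card ((\<lambda>n. n + i*T) ` ?P - ?P)) \<le> real (card (((\<lambda>n. n + i*T) ` ?P) - ?P \<union> (?P - (\<lambda>n. n + i*T) ` ?P)))" for i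
      by (simp add: card_mono fin)
    have "real J * real (card (?P \<inter> {..<T})) \<le> real (card ?P) + (\<Sum>i<J. real (card (((\<lambda>n. n + i*T) ` ?P) - ?P \<union> (?P - (\<lambda>n. n + i*T) ` ?P))))"
      using 1 sum_mono[of "{..<J}" "\<lambda>i. real (card ((\<lambda>n. n + i*T) ` ?P - ?P))", OF 2] by linarith
    then have "real J * real (card (?P \<inter> {..<T})) / real (card ?P) \<le> (real (card ?P) + (\<Sum>i<J. real (card (((\<lambda>n. n + i*T) ` ?P) - ?P \<union> (?P - (\<lambda>n. n + i*T) ` ?P))))) / real (card ?P)"
      using cP by (simp add: divide_right_mono)
    also have "\<dots> = 1 + (\<Sum>i<J. symd \<Phi> (i*T) N)"
      using cP unfolding symd_def by (simp add: add_divide_distrib sum_divide_distrib)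
    finally show ?thesis by simp
  qed
  show ?thesis
  proof (rule order_tendstoI)
    fix a :: real assume "a < 0"
    then show "eventually (\<lambda>N. a < real (card (\<Phi> N \<inter> {..<T})) / real (card (\<Phi> N))) sequentially"
      by (intro always_eventually allI) (auto intro: less_le_trans)
  next
    fix a :: real assume a: "0 < a"
    obtain J :: nat where J: "2 / a < real J" using reals_Archimedean2 by blast
    have "0 < 2 / a" using a by simp
    then have Jpos: "real J > 0" using J by linarith
    have "(\<lambda>N. \<Sum>i<J. symd \<Phi> (i*T) N) \<longlonglongrightarrow> (\<Sum>i<J. 0)"
      by (intro tendsto_sum foelner_symd F)
    then have lim: "(\<lambda>N. \<Sum>i<J. symd \<Phi> (i*T) N) \<longlonglongrightarrow> 0" by simp
    have "eventually (\<lambda>N. (\<Sum>i<J. symd \<Phi> (i*T) N) < 1) sequentially"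
      by (rule order_tendstoD(2)[OF lim]) simp
    then show "eventually (\<lambda>N. real (card (\<Phi> N \<inter> {..<T})) / real (card (\<Phi> N)) < a) sequentially"
    proof (rule eventually_mono)
      fix N assume lt: "(\<Sum>i<J. symd \<Phi> (i*T) N) < 1"
      let ?x = "real (card (\<Phi> N \<inter> {..<T})) / real (card (\<Phi> N))"
      have "real J * ?x < 2" using key[of J N] lt by linarith
      then have "?x < 2 / real J" using Jpos by (simp add: pos_less_divide_eq mult.commute)
      also have "2 / real J < a" using J a Jpos by (simp add: pos_divide_less_eq mult.commute)
      finally show "?x < a" .
    qed
  qed
qed

definition Ps :: "nat set \<Rightarrow> (nat \<Rightarrow> complex) \<Rightarrow> (nat \<Rightarrow> real) \<Rightarrow> nat \<Rightarrow> complex" where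
  "Ps S c \<theta> n = (\<Sum>k\<in>S. c k * chr (- \<theta> k) n)"

lemma diff_not_int:
  fixes x y :: real
  assumes "0 \<le> x" "x < 1" "0 \<le> y" "y < 1" "x \<noteq> y"
  shows "x - y \<notin> \<int>"
proof
  assume "x - y \<in> \<int>"
  then obtain k :: int where k: "x - y = of_int k" using Ints_cases by metis
  have "of_int k < (1::real)" "of_int k > (-1::real)" using assms k by linarith+
  then have "k < 1" "k > -1" by simp_all
  then have "k = 0" by linarith
  then have "x - y = 0" using k by simp
  then show False using assms(5) by simp
qed

lemma avg_chr_lim:
  assumes F: "foelner \<Psi>" and "0 \<le> x" "x < 1" "0 \<le> y" "y < 1"
  shows "(\<lambda>N. favg \<Psi> (chr (x - y)) N) \<longlonglongrightarrow> (if x = y then 1 else 0)"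
proof (cases "x = y")
  case True
  have "chr (x - y) = (\<lambda>n. 1)" using True by (intro ext) simp
  then have "favg \<Psi> (chr (x - y)) N = 1" for N
    using favg_const[OF foelner_fne[OF F], of 1 N] by simp
  then show ?thesis using True by simp
next
  case False
  then show ?thesis using avg_chr_tendsto[OF F diff_not_int[OF assms(2-5) False]] by simp
qed

lemma cnj_Ps: "cnj (Ps S c \<theta> n) = (\<Sum>k\<in>S. cnj (c k) * chr (\<theta> k) n)"
  unfolding Ps_def by (simp add: cnj_chr)

lemma Ps_sq:
  "Ps S c \<theta> n * cnj (Ps S c \<theta> n) = (\<Sum>k\<in>S. \<Sum>l\<in>S. (c k * cnj (c l)) * chr (\<theta> l - \<theta> k) n)"
proof -
  have "Ps S c \<theta> n * cnj (Ps S c \<theta> n) = (\<Sum>k\<in>S. \<Sum>l\<in>S. (c k * chr (- \<theta> k) n) * (cnj (c l) * chr (\<theta> l) n))"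
    unfolding cnj_Ps by (simp add: Ps_def sum_product)
  also have "\<dots> = (\<Sum>k\<in>S. \<Sum>l\<in>S. (c k * cnj (c l)) * chr (\<theta> l - \<theta> k) n)"
  proof (intro sum.cong refl)
    fix k l
    have "chr (- \<theta> k) n * chr (\<theta> l) n = chr (\<theta> l - \<theta> k) n" by (simp add: chr_mult)
    then show "(c k * chr (- \<theta> k) n) * (cnj (c l) * chr (\<theta> l) n) = (c k * cnj (c l)) * chr (\<theta> l - \<theta> k) n"
      by (simp add: mult_ac)
  qed
  finally show ?thesis .
qed

lemma sq_as_Re: "(cmod z)\<^sup>2 = Re (z * cnj z)"
  using complex_norm_square[of z] by (metis Re_complex_of_real)

lemma favg_sq_Re: "favg \<Psi> (\<lambda>n. (cmod (g n))\<^sup>2) N = Re (favg \<Psi> (\<lambda>n. g n * cnj (g n)) N)"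
  by (simp add: favg_Re sq_as_Re)

lemma avg_Ps_sq_lim:
  assumes F: "foelner \<Psi>" and S: "finite S" and inj: "inj_on \<theta> S"
    and rng: "\<And>k. k \<in> S \<Longrightarrow> 0 \<le> \<theta> k \<and> \<theta> k < 1"
  shows "(\<lambda>N. favg \<Psi> (\<lambda>n. Ps S c \<theta> n * cnj (Ps S c \<theta> n)) N) \<longlonglongrightarrow> (\<Sum>k\<in>S. of_real ((cmod (c k))\<^sup>2))"
proof -
  have eq: "favg \<Psi> (\<lambda>n. Ps S c \<theta> n * cnj (Ps S c \<theta> n)) N =
      (\<Sum>k\<in>S. \<Sum>l\<in>S. (c k * cnj (c l)) * favg \<Psi> (chr (\<theta> l - \<theta> k)) N)" for N
    unfolding Ps_sq favg_sum favg_cmult by simp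
  have "(\<lambda>N. \<Sum>k\<in>S. \<Sum>l\<in>S. (c k * cnj (c l)) * favg \<Psi> (chr (\<theta> l - \<theta> k)) N) \<longlonglongrightarrow>
      (\<Sum>k\<in>S. \<Sum>l\<in>S. (c k * cnj (c l)) * (if \<theta> l = \<theta> k then 1 else 0))"
  proof (intro tendsto_sum tendsto_mult tendsto_const)
    fix k l assume "k \<in> S" "l \<in> S"
    then show "(\<lambda>N. favg \<Psi> (chr (\<theta> l - \<theta> k)) N) \<longlonglongrightarrow> (if \<theta> l = \<theta> k then 1 else 0)"
      using avg_chr_lim[OF F] rng by blast
  qed
  also have "(\<Sum>k\<in>S. \<Sum>l\<in>S. (c k * cnj (c l)) * (if \<theta> l = \<theta> k then 1 else 0)) =
      (\<Sum>k\<in>S. \<Sum>l\<in>S. (if l = k then c k * cnj (c l) else 0))"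
  proof (intro sum.cong refl)
    fix k l assume "k \<in> S" "l \<in> S"
    then have "(\<theta> l = \<theta> k) = (l = k)" using inj by (auto simp: inj_on_def)
    then show "(c k * cnj (c l)) * (if \<theta> l = \<theta> k then 1 else 0) = (if l = k then c k * cnj (c l) else 0)"
      by simp
  qed
  also have "\<dots> = (\<Sum>k\<in>S. c k * cnj (c k))"
    using S by (simp add: sum.delta)
  also have "\<dots> = (\<Sum>k\<in>S. of_real ((cmod (c k))\<^sup>2))"
    by (intro sum.cong refl) (rule complex_norm_square[symmetric])
  finally show ?thesis unfolding eq .
qed

lemma avg_Ps_norm_lim:
  assumes F: "foelner \<Psi>" and S: "finite S" and inj: "inj_on \<theta> S"
    and rng: "\<And>k. k \<in> S \<Longrightarrow> 0 \<le> \<theta> k \<and> \<theta> k < 1"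
  shows "(\<lambda>N. favg \<Psi> (\<lambda>n. (cmod (Ps S c \<theta> n))\<^sup>2) N) \<longlonglongrightarrow> (\<Sum>k\<in>S. (cmod (c k))\<^sup>2)"
proof -
  have "(\<lambda>N. Re (favg \<Psi> (\<lambda>n. Ps S c \<theta> n * cnj (Ps S c \<theta> n)) N)) \<longlonglongrightarrow> Re (\<Sum>k\<in>S. of_real ((cmod (c k))\<^sup>2))"
    by (intro tendsto_Re avg_Ps_sq_lim[OF assms])
  then show ?thesis by (simp add: favg_sq_Re)
qed

lemma bessel:
  fixes S :: "nat set"
  assumes F: "foelner \<Psi>" and S: "finite S" and inj: "inj_on \<theta> S"
    and rng: "\<And>k. k \<in> S \<Longrightarrow> 0 \<le> \<theta> k \<and> \<theta> k < 1"
    and lim: "\<And>k. k \<in> S \<Longrightarrow> (\<lambda>N. favg \<Psi> (\<lambda>n. f n * chr (\<theta> k) n) N) \<longlonglongrightarrow> c k"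
    and B: "\<And>N. favg \<Psi> (\<lambda>n. (cmod (f n))\<^sup>2) N \<le> B"
  shows "(\<Sum>k\<in>S. (cmod (c k))\<^sup>2) \<le> B"
proof -
  let ?P = "Ps S c \<theta>"
  let ?g = "\<lambda>n. f n - ?P n"
  have e1: "favg \<Psi> (\<lambda>n. f n * cnj (?P n)) N = (\<Sum>k\<in>S. cnj (c k) * favg \<Psi> (\<lambda>n. f n * chr (\<theta> k) n) N)" for N
  proof -
    have "(\<lambda>n. f n * cnj (?P n)) = (\<lambda>n. \<Sum>k\<in>S. cnj (c k) * (f n * chr (\<theta> k) n))"
      unfolding cnj_Ps by (simp add: sum_distrib_left mult_ac)
    then show ?thesis by (simp add: favg_sum favg_cmult)
  qed
  have l1: "(\<lambda>N. favg \<Psi> (\<lambda>n. f n * cnj (?P n)) N) \<longlonglongrightarrow> (\<Sum>k\<in>S. of_real ((cmod (c k))\<^sup>2))"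
  proof -
    have "(\<lambda>N. \<Sum>k\<in>S. cnj (c k) * favg \<Psi> (\<lambda>n. f n * chr (\<theta> k) n) N) \<longlonglongrightarrow> (\<Sum>k\<in>S. cnj (c k) * c k)"
      by (intro tendsto_sum tendsto_mult tendsto_const lim)
    moreover have "(\<Sum>k\<in>S. cnj (c k) * c k) = (\<Sum>k\<in>S. of_real ((cmod (c k))\<^sup>2))"
      by (intro sum.cong refl) (subst complex_norm_square, simp add: mult.commute)
    ultimately show ?thesis unfolding e1 by simp
  qed
  have l2: "(\<lambda>N. favg \<Psi> (\<lambda>n. ?P n * cnj (f n)) N) \<longlonglongrightarrow> (\<Sum>k\<in>S. of_real ((cmod (c k))\<^sup>2))"
  proof -
    have "(\<lambda>N. cnj (favg \<Psi> (\<lambda>n. f n * cnj (?P n)) N)) \<longlonglongrightarrow> cnj (\<Sum>k\<in>S. of_real ((cmod (c k))\<^sup>2))"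
      by (intro tendsto_cnj l1)
    then show ?thesis by (simp add: favg_cnj mult.commute)
  qed
  note l3 = avg_Ps_sq_lim[OF F S inj rng, of c]
  have exp: "favg \<Psi> (\<lambda>n. f n * cnj (f n)) N - favg \<Psi> (\<lambda>n. ?g n * cnj (?g n)) N =
     favg \<Psi> (\<lambda>n. f n * cnj (?P n)) N + favg \<Psi> (\<lambda>n. ?P n * cnj (f n)) N - favg \<Psi> (\<lambda>n. ?P n * cnj (?P n)) N" for N
  proof -
    have "(\<lambda>n. ?g n * cnj (?g n)) = (\<lambda>n. (f n * cnj (f n) - f n * cnj (?P n)) - (?P n * cnj (f n) - ?P n * cnj (?P n)))"
      by (simp add: algebra_simps)
    then show ?thesis by (simp add: favg_diff)
  qed
  have "(\<lambda>N. favg \<Psi> (\<lambda>n. f n * cnj (f n)) N - favg \<Psi> (\<lambda>n. ?g n * cnj (?g n)) N) \<longlonglongrightarrow>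
      (\<Sum>k\<in>S. of_real ((cmod (c k))\<^sup>2)) + (\<Sum>k\<in>S. of_real ((cmod (c k))\<^sup>2)) - (\<Sum>k\<in>S. of_real ((cmod (c k))\<^sup>2))"
    unfolding exp by (intro tendsto_add tendsto_diff l1 l2 l3)
  then have "(\<lambda>N. Re (favg \<Psi> (\<lambda>n. f n * cnj (f n)) N - favg \<Psi> (\<lambda>n. ?g n * cnj (?g n)) N)) \<longlonglongrightarrow>
      Re (\<Sum>k\<in>S. of_real ((cmod (c k))\<^sup>2))"
    by (intro tendsto_Re) simp
  then have lim2: "(\<lambda>N. favg \<Psi> (\<lambda>n. (cmod (f n))\<^sup>2) N - favg \<Psi> (\<lambda>n. (cmod (?g n))\<^sup>2) N) \<longlonglongrightarrow>
      (\<Sum>k\<in>S. (cmod (c k))\<^sup>2)"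
    by (simp add: favg_sq_Re)
  have "favg \<Psi> (\<lambda>n. (cmod (f n))\<^sup>2) N - favg \<Psi> (\<lambda>n. (cmod (?g n))\<^sup>2) N \<le> B" for N
    using B[of N] sq_nonneg_favg[of \<Psi> ?g N] by linarith
  then show ?thesis by (intro LIMSEQ_le_const2[OF lim2]) simp
qed

definition coef :: "(nat \<Rightarrow> nat set) \<Rightarrow> (nat \<Rightarrow> complex) \<Rightarrow> real \<Rightarrow> nat \<Rightarrow> complex" where
  "coef \<Psi> f \<theta> N = favg \<Psi> (\<lambda>n. f n * chr \<theta> n) N"

definition freq :: "(nat \<Rightarrow> nat set) \<Rightarrow> (nat \<Rightarrow> complex) \<Rightarrow> real \<Rightarrow> real \<Rightarrow> bool" where
  "freq \<Psi> f \<theta> \<eta> \<longleftrightarrow> frequently (\<lambda>N. \<eta> \<le> cmod (coef \<Psi> f \<theta> N)) sequentially"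

definition Pstep :: "(nat \<Rightarrow> nat set) \<Rightarrow> (nat \<Rightarrow> complex) \<Rightarrow> (nat \<Rightarrow> nat) \<Rightarrow> real set \<Rightarrow>
    real \<Rightarrow> (nat \<Rightarrow> nat) \<Rightarrow> complex \<Rightarrow> bool" where
  "Pstep \<Phi> f \<sigma> T \<theta>' r c' \<longleftrightarrow> 0 \<le> \<theta>' \<and> \<theta>' < 1 \<and> \<theta>' \<notin> T \<and> strict_mono r \<and>
     (coef (\<Phi> \<circ> (\<sigma> \<circ> r)) f \<theta>' \<longlonglongrightarrow> c') \<and>
     (\<forall>\<theta> \<eta>. 0 \<le> \<theta> \<and> \<theta> < 1 \<and> \<theta> \<notin> T \<and> \<eta> > 0 \<and> freq (\<Phi> \<circ> \<sigma>) f \<theta> \<eta> \<longrightarrow> \<eta> \<le> 2 * cmod c')"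

lemma coef_comp: "coef (\<Phi> \<circ> \<sigma>) f \<theta> N = coef \<Phi> f \<theta> (\<sigma> N)"
  unfolding coef_def by (simp add: favg_comp)

lemma coef_comp2: "coef (\<Phi> \<circ> (\<sigma> \<circ> r)) f \<theta> = coef (\<Phi> \<circ> \<sigma>) f \<theta> \<circ> r"
  by (rule ext) (simp add: coef_def favg_def)

lemma coef_bound:
  assumes B: "\<And>N. favg \<Phi> (\<lambda>n. (cmod (f n))\<^sup>2) N \<le> B" and fne: "fne \<Phi>"
  shows "cmod (coef \<Phi> f \<theta> N) \<le> (B + 1) / 2"
proof -
  have "cnj (chr (-\<theta>) n) = chr \<theta> n" for n by (simp add: cnj_chr)
  then have "coef \<Phi> f \<theta> N = favg \<Phi> (\<lambda>n. f n * cnj (chr (-\<theta>) n)) N"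
    unfolding coef_def by simp
  also have "cmod \<dots> \<le> (1 * favg \<Phi> (\<lambda>n. (cmod (f n))\<^sup>2) N + favg \<Phi> (\<lambda>n. (cmod (chr (-\<theta>) n))\<^sup>2) N / 1) / 2"
    by (rule cs_avg) simp
  also have "favg \<Phi> (\<lambda>n. (cmod (chr (-\<theta>) n))\<^sup>2) N = 1"
    using favg_const[OF fne, of "1::real" N] by simp
  finally show ?thesis using B[of N] by simp
qed

lemma frequently_infinite: "frequently P sequentially \<Longrightarrow> \<exists>r::nat\<Rightarrow>nat. strict_mono r \<and> (\<forall>n. P (r n))"
proof -
  assume "frequently P sequentially"
  then have "infinite {x. P x}" unfolding cofinite_eq_sequentially[symmetric] frequently_cofinite by simp
  from infinite_enumerate[OF this] show ?thesis by auto
qed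

lemma step_exists:
  assumes fne: "fne \<Phi>" and B: "\<And>N. favg \<Phi> (\<lambda>n. (cmod (f n))\<^sup>2) N \<le> B"
    and sm: "strict_mono \<sigma>" and T: "finite T"
  shows "\<exists>x. Pstep \<Phi> f \<sigma> T (fst x) (fst (snd x)) (snd (snd x))"
proof -
  let ?a = "coef (\<Phi> \<circ> \<sigma>) f"
  define C where "C = (B + 1) / 2"
  have bnd: "cmod (?a \<theta> N) \<le> C" for \<theta> N
    unfolding coef_comp C_def by (rule coef_bound[OF B fne])
  have bdd: "bounded (range g)" if "\<And>N. cmod (g N) \<le> C" for g :: "nat \<Rightarrow> complex"
    unfolding bounded_iff using that by blast
  have "infinite ({0..<1::real} - T)" using T by (intro Diff_infinite_finite) simp_all
  then obtain \<theta>0 where th0: "\<theta>0 \<in> {0..<1::real} - T" using infinite_imp_nonempty by blast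
  define V where "V = {\<eta>. 0 \<le> \<eta> \<and> (\<exists>\<theta>. 0 \<le> \<theta> \<and> \<theta> < 1 \<and> \<theta> \<notin> T \<and> freq (\<Phi> \<circ> \<sigma>) f \<theta> \<eta>)}"
  have "freq (\<Phi> \<circ> \<sigma>) f \<theta> 0" for \<theta>
    unfolding freq_def by (rule eventually_frequently) simp_all
  then have V0: "0 \<in> V" unfolding V_def using th0 by auto
  have Vle: "\<eta> \<le> C" if eV: "\<eta> \<in> V" for \<eta>
  proof -
    obtain \<theta> where "freq (\<Phi> \<circ> \<sigma>) f \<theta> \<eta>" using eV unfolding V_def by blast
    then obtain N where "\<eta> \<le> cmod (?a \<theta> N)" unfolding freq_def by (auto dest: frequently_ex)
    then show ?thesis using bnd[of \<theta> N] by linarith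
  qed
  have bddV: "bdd_above V" unfolding bdd_above_def using Vle by blast
  define s where "s = Sup V"
  have s0: "0 \<le> s" unfolding s_def using V0 bddV by (rule cSup_upper)
  have sV: "\<eta> \<le> s" if "\<eta> \<in> V" for \<eta> unfolding s_def using that bddV by (rule cSup_upper)
  show ?thesis
  proof (cases "s = 0")
    case True
    obtain c' r where r: "strict_mono r" and lim: "(?a \<theta>0 \<circ> r) \<longlonglongrightarrow> c'"
      using bounded_imp_convergent_subsequence[OF bdd[of "?a \<theta>0", OF bnd]] by blast
    have "Pstep \<Phi> f \<sigma> T \<theta>0 r c'"
      unfolding Pstep_def
    proof (intro conjI allI impI)
      show "coef (\<Phi> \<circ> (\<sigma> \<circ> r)) f \<theta>0 \<longlonglongrightarrow> c'"
        unfolding coef_comp2 using lim .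
      fix \<theta> \<eta> assume h: "0 \<le> \<theta> \<and> \<theta> < 1 \<and> \<theta> \<notin> T \<and> 0 < \<eta> \<and> freq (\<Phi> \<circ> \<sigma>) f \<theta> \<eta>"
      then have "\<eta> \<in> V" unfolding V_def by auto
      then show "\<eta> \<le> 2 * cmod c'" using sV True h by fastforce
    qed (use th0 r in auto)
    then show ?thesis by (intro exI[of _ "(\<theta>0, r, c')"]) simp
  next
    case False
    then have "s / 2 < Sup V" using s0 unfolding s_def by simp
    then obtain \<eta>0 where e0: "\<eta>0 \<in> V" "s / 2 < \<eta>0" using less_cSup_iff[of V "s/2"] V0 bddV by blast
    then obtain \<theta>1 where th1: "0 \<le> \<theta>1" "\<theta>1 < 1" "\<theta>1 \<notin> T" "freq (\<Phi> \<circ> \<sigma>) f \<theta>1 \<eta>0"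
      unfolding V_def by blast
    obtain r1 :: "nat \<Rightarrow> nat" where r1: "strict_mono r1" "\<And>N. \<eta>0 \<le> cmod (?a \<theta>1 (r1 N))"
      using frequently_infinite[OF th1(4)[unfolded freq_def]] by blast
    obtain c' r2 where r2: "strict_mono r2" and lim: "((\<lambda>N. ?a \<theta>1 (r1 N)) \<circ> r2) \<longlonglongrightarrow> c'"
      using bounded_imp_convergent_subsequence[OF bdd[of "\<lambda>N. ?a \<theta>1 (r1 N)", OF bnd]] by blast
    have limn: "(\<lambda>N. cmod (?a \<theta>1 (r1 (r2 N)))) \<longlonglongrightarrow> cmod c'"
      using tendsto_norm[OF lim] by (simp add: o_def)
    have "\<eta>0 \<le> cmod c'" by (rule LIMSEQ_le_const[OF limn]) (use r1 in auto)
    have "Pstep \<Phi> f \<sigma> T \<theta>1 (r1 \<circ> r2) c'"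
      unfolding Pstep_def
    proof (intro conjI allI impI)
      show "coef (\<Phi> \<circ> (\<sigma> \<circ> (r1 \<circ> r2))) f \<theta>1 \<longlonglongrightarrow> c'"
        unfolding coef_comp2 using lim by (simp add: comp_def)
      show "strict_mono (r1 \<circ> r2)" using r1 r2 by (simp add: strict_mono_o)
      fix \<theta> \<eta> assume h: "0 \<le> \<theta> \<and> \<theta> < 1 \<and> \<theta> \<notin> T \<and> 0 < \<eta> \<and> freq (\<Phi> \<circ> \<sigma>) f \<theta> \<eta>"
      then have "\<eta> \<in> V" unfolding V_def by auto
      then have "\<eta> \<le> s" by (rule sV)
      then show "\<eta> \<le> 2 * cmod c'" using e0 \<open>\<eta>0 \<le> cmod c'\<close> by linarith
    qed (use th1 in auto)
    then show ?thesis by (intro exI[of _ "(\<theta>1, r1 \<circ> r2, c')"]) simp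
  qed
qed

lemma coef_comp_fun: "coef (\<Phi> \<circ> \<sigma>) f \<theta> = (\<lambda>N. coef \<Phi> f \<theta> (\<sigma> N))"
  by (rule ext) (simp add: coef_comp)

definition G :: "(nat \<Rightarrow> nat set) \<Rightarrow> (nat \<Rightarrow> complex) \<Rightarrow> (nat \<Rightarrow> nat) \<Rightarrow> real set \<Rightarrow> real \<times> (nat \<Rightarrow> nat) \<times> complex" where
  "G \<Phi> f \<sigma> T = (SOME x. Pstep \<Phi> f \<sigma> T (fst x) (fst (snd x)) (snd (snd x)))"

primrec St :: "(nat \<Rightarrow> nat set) \<Rightarrow> (nat \<Rightarrow> complex) \<Rightarrow> nat \<Rightarrow> (nat \<Rightarrow> nat) \<times> real set" where
  "St \<Phi> f 0 = (id, {})"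
| "St \<Phi> f (Suc k) = (fst (St \<Phi> f k) \<circ> fst (snd (G \<Phi> f (fst (St \<Phi> f k)) (snd (St \<Phi> f k)))),
       insert (fst (G \<Phi> f (fst (St \<Phi> f k)) (snd (St \<Phi> f k)))) (snd (St \<Phi> f k)))"

definition "sg \<Phi> f k = fst (St \<Phi> f k)"
definition "Ts \<Phi> f k = snd (St \<Phi> f k)"
definition "th \<Phi> f k = fst (G \<Phi> f (sg \<Phi> f k) (Ts \<Phi> f k))"
definition "rr \<Phi> f k = fst (snd (G \<Phi> f (sg \<Phi> f k) (Ts \<Phi> f k)))"
definition "cc \<Phi> f k = snd (snd (G \<Phi> f (sg \<Phi> f k) (Ts \<Phi> f k)))"
definition "dg \<Phi> f N = sg \<Phi> f N N"

lemma sg_0: "sg \<Phi> f 0 = id" and Ts_0: "Ts \<Phi> f 0 = {}"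
  by (simp_all add: sg_def Ts_def)

lemma sg_Suc: "sg \<Phi> f (Suc k) = sg \<Phi> f k \<circ> rr \<Phi> f k"
  by (simp add: sg_def rr_def Ts_def)

lemma Ts_Suc: "Ts \<Phi> f (Suc k) = insert (th \<Phi> f k) (Ts \<Phi> f k)"
  by (simp add: sg_def th_def Ts_def)

lemma Pstep_k:
  assumes fne: "fne \<Phi>" and B: "\<And>N. favg \<Phi> (\<lambda>n. (cmod (f n))\<^sup>2) N \<le> B"
    and "strict_mono (sg \<Phi> f k)" "finite (Ts \<Phi> f k)"
  shows "Pstep \<Phi> f (sg \<Phi> f k) (Ts \<Phi> f k) (th \<Phi> f k) (rr \<Phi> f k) (cc \<Phi> f k)"
  unfolding th_def rr_def cc_def G_def by (rule someI_ex, rule step_exists[OF fne B assms(3,4)])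

lemma invariant:
  assumes fne: "fne \<Phi>" and B: "\<And>N. favg \<Phi> (\<lambda>n. (cmod (f n))\<^sup>2) N \<le> B"
  shows "strict_mono (sg \<Phi> f k) \<and> finite (Ts \<Phi> f k) \<and> Ts \<Phi> f k = th \<Phi> f ` {..<k}
     \<and> Pstep \<Phi> f (sg \<Phi> f k) (Ts \<Phi> f k) (th \<Phi> f k) (rr \<Phi> f k) (cc \<Phi> f k)"
proof (induction k)
  case 0
  have a: "strict_mono (sg \<Phi> f 0)" and b: "finite (Ts \<Phi> f 0)" by (simp_all add: sg_0 Ts_0 strict_mono_def)
  then show ?case using Pstep_k[OF fne B a b] by (simp add: Ts_0)
next
  case (Suc k)
  then have sm: "strict_mono (sg \<Phi> f k)" and fin: "finite (Ts \<Phi> f k)" and T: "Ts \<Phi> f k = th \<Phi> f ` {..<k}"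
    and P: "Pstep \<Phi> f (sg \<Phi> f k) (Ts \<Phi> f k) (th \<Phi> f k) (rr \<Phi> f k) (cc \<Phi> f k)" by blast+
  have sm': "strict_mono (sg \<Phi> f (Suc k))"
    unfolding sg_Suc using sm P by (simp add: Pstep_def strict_mono_o)
  have fin': "finite (Ts \<Phi> f (Suc k))" unfolding Ts_Suc using fin by simp
  have T': "Ts \<Phi> f (Suc k) = th \<Phi> f ` {..<Suc k}" unfolding Ts_Suc T lessThan_Suc by simp
  show ?case using sm' fin' T' Pstep_k[OF fne B sm' fin'] by blast
qed

lemma sg_tail:
  assumes fne: "fne \<Phi>" and B: "\<And>N. favg \<Phi> (\<lambda>n. (cmod (f n))\<^sup>2) N \<le> B"
  shows "\<exists>R. strict_mono R \<and> sg \<Phi> f (k + d) = sg \<Phi> f k \<circ> R"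
proof (induction d)
  case 0
  then show ?case by (intro exI[of _ id]) (simp add: strict_mono_def)
next
  case (Suc d)
  then obtain R where R: "strict_mono R" "sg \<Phi> f (k + d) = sg \<Phi> f k \<circ> R" by blast
  have "strict_mono (rr \<Phi> f (k + d))"
    using invariant[OF fne B, of "k + d"] by (simp add: Pstep_def)
  then have "strict_mono (R \<circ> rr \<Phi> f (k + d))" using R by (simp add: strict_mono_o)
  moreover have "sg \<Phi> f (k + Suc d) = sg \<Phi> f k \<circ> (R \<circ> rr \<Phi> f (k + d))"
    using R by (simp add: sg_Suc o_assoc)
  ultimately show ?case by blast
qed

lemma dg_tail:
  assumes fne: "fne \<Phi>" and B: "\<And>N. favg \<Phi> (\<lambda>n. (cmod (f n))\<^sup>2) N \<le> B"
  obtains m where "\<And>N. k \<le> N \<Longrightarrow> dg \<Phi> f N = sg \<Phi> f k (m N)" "\<And>N. k \<le> N \<Longrightarrow> N \<le> m N"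
proof -
  have "\<forall>N. \<exists>j. k \<le> N \<longrightarrow> (dg \<Phi> f N = sg \<Phi> f k j \<and> N \<le> j)"
  proof
    fix N
    show "\<exists>j. k \<le> N \<longrightarrow> (dg \<Phi> f N = sg \<Phi> f k j \<and> N \<le> j)"
    proof (cases "k \<le> N")
      case True
      obtain R where R: "strict_mono R" "sg \<Phi> f (k + (N - k)) = sg \<Phi> f k \<circ> R"
        using sg_tail[OF fne B, of k "N - k"] by blast
      have "dg \<Phi> f N = sg \<Phi> f k (R N)" using R(2) True unfolding dg_def by simp
      moreover have "N \<le> R N" using R(1) by (rule seq_suble)
      ultimately show ?thesis by blast
    qed simp
  qed
  then obtain m where "\<forall>N. k \<le> N \<longrightarrow> (dg \<Phi> f N = sg \<Phi> f k (m N) \<and> N \<le> m N)"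
    using choice[of "\<lambda>N j. k \<le> N \<longrightarrow> (dg \<Phi> f N = sg \<Phi> f k j \<and> N \<le> j)"] by auto
  then show ?thesis using that by blast
qed

lemma dg_lim:
  assumes fne: "fne \<Phi>" and B: "\<And>N. favg \<Phi> (\<lambda>n. (cmod (f n))\<^sup>2) N \<le> B"
    and lim: "(\<lambda>j. X (sg \<Phi> f k j)) \<longlonglongrightarrow> l"
  shows "(\<lambda>N. X (dg \<Phi> f N)) \<longlonglongrightarrow> l"
proof -
  obtain m where m1: "\<And>N. k \<le> N \<Longrightarrow> dg \<Phi> f N = sg \<Phi> f k (m N)" and m2: "\<And>N. k \<le> N \<Longrightarrow> N \<le> m N"
    using dg_tail[OF fne B] by blast
  have fm: "filterlim m sequentially sequentially"
    by (rule filterlim_at_top_mono[OF filterlim_ident]) (use m2 in \<open>auto simp: eventually_sequentially\<close>)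
  have "(\<lambda>N. X (sg \<Phi> f k (m N))) \<longlonglongrightarrow> l"
    using filterlim_compose[OF lim fm] .
  moreover have "eventually (\<lambda>N. X (sg \<Phi> f k (m N)) = X (dg \<Phi> f N)) sequentially"
  proof -
    have "\<forall>n\<ge>k. X (sg \<Phi> f k (m n)) = X (dg \<Phi> f n)" using m1 by simp
    then show ?thesis unfolding eventually_sequentially by blast
  qed
  ultimately show ?thesis by (rule Lim_transform_eventually)
qed

lemma dg_freq:
  assumes fne: "fne \<Phi>" and B: "\<And>N. favg \<Phi> (\<lambda>n. (cmod (f n))\<^sup>2) N \<le> B"
    and fr: "frequently (\<lambda>N. Q (dg \<Phi> f N)) sequentially"
  shows "frequently (\<lambda>j. Q (sg \<Phi> f k j)) sequentially"
proof (rule ccontr)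
  assume "\<not> frequently (\<lambda>j. Q (sg \<Phi> f k j)) sequentially"
  then have ev: "eventually (\<lambda>j. \<not> Q (sg \<Phi> f k j)) sequentially" by (simp add: frequently_def)
  obtain m where m1: "\<And>N. k \<le> N \<Longrightarrow> dg \<Phi> f N = sg \<Phi> f k (m N)" and m2: "\<And>N. k \<le> N \<Longrightarrow> N \<le> m N"
    using dg_tail[OF fne B] by blast
  have "filterlim m sequentially sequentially"
    by (rule filterlim_at_top_mono[OF filterlim_ident]) (use m2 in \<open>auto simp: eventually_sequentially\<close>)
  from eventually_compose_filterlim[OF ev this]
  have "eventually (\<lambda>N. \<not> Q (sg \<Phi> f k (m N))) sequentially" .
  moreover have "eventually (\<lambda>N. k \<le> N) sequentially" by (simp add: eventually_ge_at_top)
  ultimately have "eventually (\<lambda>N. \<not> Q (dg \<Phi> f N)) sequentially"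
    by eventually_elim (use m1 in auto)
  then show False using fr by (simp add: frequently_def)
qed

lemma dg_mono:
  assumes fne: "fne \<Phi>" and B: "\<And>N. favg \<Phi> (\<lambda>n. (cmod (f n))\<^sup>2) N \<le> B"
  shows "strict_mono (dg \<Phi> f)"
  unfolding strict_mono_Suc_iff
proof
  fix N
  have sm: "strict_mono (sg \<Phi> f N)" and r: "strict_mono (rr \<Phi> f N)"
    using invariant[OF fne B, of N] by (auto simp: Pstep_def)
  have "Suc N \<le> rr \<Phi> f N (Suc N)" using r by (rule seq_suble)
  then have "N < rr \<Phi> f N (Suc N)" by simp
  then have "sg \<Phi> f N N < sg \<Phi> f N (rr \<Phi> f N (Suc N))" by (rule strict_monoD[OF sm])
  then show "dg \<Phi> f N < dg \<Phi> f (Suc N)" unfolding dg_def sg_Suc by simp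
qed

lemma extraction:
  assumes F: "foelner \<Phi>" and B: "\<And>N. favg \<Phi> (\<lambda>n. (cmod (f n))\<^sup>2) N \<le> B"
  shows "\<exists>(\<sigma>::nat\<Rightarrow>nat) (t::nat\<Rightarrow>real) (c::nat\<Rightarrow>complex). strict_mono \<sigma> \<and> inj t \<and> (\<forall>k. 0 \<le> t k \<and> t k < 1) \<and>
     (\<forall>k. coef (\<Phi> \<circ> \<sigma>) f (t k) \<longlonglongrightarrow> c k) \<and>
     (\<forall>\<theta>. 0 \<le> \<theta> \<and> \<theta> < 1 \<and> \<theta> \<notin> range t \<longrightarrow> coef (\<Phi> \<circ> \<sigma>) f \<theta> \<longlonglongrightarrow> 0)"
proof -
  have fne: "fne \<Phi>" using F by (rule foelner_fne)
  note inv = invariant[OF fne B]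
  let ?t = "th \<Phi> f" and ?c = "cc \<Phi> f" and ?\<sigma> = "dg \<Phi> f"
  have P: "Pstep \<Phi> f (sg \<Phi> f k) (Ts \<Phi> f k) (?t k) (rr \<Phi> f k) (?c k)" for k using inv by blast
  have rng: "0 \<le> ?t k \<and> ?t k < 1" for k using P[of k] by (simp add: Pstep_def)
  have inj: "inj ?t"
  proof (rule injI)
    fix i j assume eq: "?t i = ?t j"
    show "i = j"
    proof (rule ccontr)
      assume "i \<noteq> j"
      then have "i < j \<or> j < i" by arith
      then show False
      proof
        assume "i < j"
        then have "?t i \<in> Ts \<Phi> f j" using inv[of j] by auto
        then show False using P[of j] eq by (simp add: Pstep_def)
      next
        assume "j < i"
        then have "?t j \<in> Ts \<Phi> f i" using inv[of i] by auto
        then show False using P[of i] eq by (simp add: Pstep_def)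
      qed
    qed
  qed
  have lim: "coef (\<Phi> \<circ> ?\<sigma>) f (?t k) \<longlonglongrightarrow> ?c k" for k
  proof -
    have "coef (\<Phi> \<circ> (sg \<Phi> f k \<circ> rr \<Phi> f k)) f (?t k) \<longlonglongrightarrow> ?c k" using P[of k] by (simp add: Pstep_def)
    moreover have "(\<lambda>j. coef \<Phi> f (?t k) (sg \<Phi> f (Suc k) j)) = coef (\<Phi> \<circ> (sg \<Phi> f k \<circ> rr \<Phi> f k)) f (?t k)"
      by (rule ext) (simp add: sg_Suc coef_comp)
    ultimately have "(\<lambda>j. coef \<Phi> f (?t k) (sg \<Phi> f (Suc k) j)) \<longlonglongrightarrow> ?c k" by simp
    from dg_lim[OF fne B this] show ?thesis unfolding coef_comp_fun .
  qed
  have B': "favg (\<Phi> \<circ> ?\<sigma>) (\<lambda>n. (cmod (f n))\<^sup>2) N \<le> B" for N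
    by (simp add: favg_comp B)
  have F': "foelner (\<Phi> \<circ> ?\<sigma>)" using F dg_mono[OF fne B] by (rule foelner_comp)
  have zero: "coef (\<Phi> \<circ> ?\<sigma>) f \<theta> \<longlonglongrightarrow> 0" if th: "0 \<le> \<theta>" "\<theta> < 1" "\<theta> \<notin> range ?t" for \<theta>
  proof (rule ccontr)
    assume nl: "\<not> coef (\<Phi> \<circ> ?\<sigma>) f \<theta> \<longlonglongrightarrow> 0"
    obtain \<eta> where e: "\<eta> > 0" "frequently (\<lambda>N. \<eta> \<le> cmod (coef (\<Phi> \<circ> ?\<sigma>) f \<theta> N)) sequentially"
    proof -
      from nl obtain r where r: "r > 0" "\<not> (\<exists>no. \<forall>n\<ge>no. dist (coef (\<Phi> \<circ> ?\<sigma>) f \<theta> n) 0 < r)"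
        unfolding LIMSEQ_def by blast
      then have "frequently (\<lambda>N. r \<le> cmod (coef (\<Phi> \<circ> ?\<sigma>) f \<theta> N)) sequentially"
        unfolding frequently_sequentially by (auto simp: not_less)
      then show ?thesis using that r by blast
    qed
    have big: "\<eta> \<le> 2 * cmod (?c k)" for k
    proof -
      have "frequently (\<lambda>N. \<eta> \<le> cmod (coef \<Phi> f \<theta> (?\<sigma> N))) sequentially"
        using e(2) by (simp add: coef_comp)
      then have "frequently (\<lambda>j. \<eta> \<le> cmod (coef \<Phi> f \<theta> (sg \<Phi> f k j))) sequentially"
        by (rule dg_freq[OF fne B])
      then have fr: "freq (\<Phi> \<circ> sg \<Phi> f k) f \<theta> \<eta>" unfolding freq_def by (simp add: coef_comp)
      have "\<theta> \<notin> Ts \<Phi> f k" using inv[of k] th(3) by auto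
      then show ?thesis using P[of k] fr th e(1) unfolding Pstep_def by blast
    qed
    obtain K :: nat where K: "B / (\<eta> / 2)\<^sup>2 < real K" using reals_Archimedean2 by blast
    have "(\<Sum>k\<in>{..<K}. (cmod (?c k))\<^sup>2) \<le> B"
      by (rule bessel[OF F' _ _ _ _ B']) (use inj rng lim[unfolded coef_def] in \<open>auto simp: inj_on_def\<close>)
    moreover have "(\<Sum>k\<in>{..<K}. (\<eta> / 2)\<^sup>2) \<le> (\<Sum>k\<in>{..<K}. (cmod (?c k))\<^sup>2)"
    proof (rule sum_mono)
      fix k
      have "\<eta> / 2 \<le> cmod (?c k)" using big[of k] by simp
      then show "(\<eta> / 2)\<^sup>2 \<le> (cmod (?c k))\<^sup>2" using e(1) by (intro power_mono) simp_all
    qed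
    ultimately have "real K * (\<eta> / 2)\<^sup>2 \<le> B" by simp
    moreover have "B < real K * (\<eta> / 2)\<^sup>2" using K e(1) by (simp add: field_simps)
    ultimately show False by simp
  qed
  have "strict_mono ?\<sigma> \<and> inj ?t \<and> (\<forall>k. 0 \<le> ?t k \<and> ?t k < 1) \<and>
     (\<forall>k. coef (\<Phi> \<circ> ?\<sigma>) f (?t k) \<longlonglongrightarrow> ?c k) \<and>
     (\<forall>\<theta>. 0 \<le> \<theta> \<and> \<theta> < 1 \<and> \<theta> \<notin> range ?t \<longrightarrow> coef (\<Phi> \<circ> ?\<sigma>) f \<theta> \<longlonglongrightarrow> 0)"
    using dg_mono[OF fne B] inj rng lim zero by auto
  then show ?thesis by metis
qed

definition gh :: "(nat \<Rightarrow> nat set) \<Rightarrow> (nat \<Rightarrow> complex) \<Rightarrow> (nat \<Rightarrow> real) \<Rightarrow> bool" where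
  "gh \<Psi> c t \<longleftrightarrow> foelner \<Psi> \<and> inj t \<and> (\<forall>k. 0 \<le> t k \<and> t k < 1) \<and> summable (\<lambda>k. (cmod (c k))\<^sup>2)"

definition tlc :: "(nat \<Rightarrow> complex) \<Rightarrow> nat \<Rightarrow> real" where
  "tlc c K = (\<Sum>k. (cmod (c (k + K)))\<^sup>2)"

definition Cb :: "(nat \<Rightarrow> complex) \<Rightarrow> nat \<Rightarrow> real" where
  "Cb c j = (2 * (\<Sum>k<j. cmod (c k)))\<^sup>2"

definition gcond :: "(nat \<Rightarrow> nat set) \<Rightarrow> (nat \<Rightarrow> complex) \<Rightarrow> (nat \<Rightarrow> real) \<Rightarrow> nat \<Rightarrow> nat \<Rightarrow> nat \<Rightarrow> bool" where
  "gcond \<Psi> c t j T N \<longleftrightarrow>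
     (\<forall>K\<le>j. favg \<Psi> (\<lambda>n. (cmod (Ps {..<j} c t n - Ps {..<K} c t n))\<^sup>2) N \<le> tlc c K + 1 / real (j+1)) \<and>
     real (card (\<Psi> N \<inter> {..<T})) * Cb c j \<le> real (card (\<Psi> N)) / real (j+1)"

definition pick :: "(nat \<Rightarrow> nat set) \<Rightarrow> (nat \<Rightarrow> complex) \<Rightarrow> (nat \<Rightarrow> real) \<Rightarrow> nat \<Rightarrow> nat \<Rightarrow> nat \<Rightarrow> nat" where
  "pick \<Psi> c t j T prev = (SOME N. prev < N \<and> gcond \<Psi> c t j T N)"

primrec Rg :: "(nat \<Rightarrow> nat set) \<Rightarrow> (nat \<Rightarrow> complex) \<Rightarrow> (nat \<Rightarrow> real) \<Rightarrow> nat \<Rightarrow> nat \<times> nat" where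
  "Rg \<Psi> c t 0 = (pick \<Psi> c t 0 0 0, Max (insert 0 (\<Psi> (pick \<Psi> c t 0 0 0))) + 1)"
| "Rg \<Psi> c t (Suc j) = (pick \<Psi> c t (Suc j) (snd (Rg \<Psi> c t j)) (fst (Rg \<Psi> c t j)),
      Max (insert (snd (Rg \<Psi> c t j)) (\<Psi> (pick \<Psi> c t (Suc j) (snd (Rg \<Psi> c t j)) (fst (Rg \<Psi> c t j))))) + 1)"

definition "tau \<Psi> c t j = fst (Rg \<Psi> c t j)"
definition "Tb \<Psi> c t j = (case j of 0 \<Rightarrow> 0 | Suc i \<Rightarrow> snd (Rg \<Psi> c t i))"
definition "Jb \<Psi> c t n = (LEAST j. n < Tb \<Psi> c t (Suc j))"
definition "fBg \<Psi> c t n = Ps {..<Jb \<Psi> c t n} c t n"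

lemma Ps_split:
  assumes "K \<le> j"
  shows "Ps {..<j} c t n - Ps {..<K} c t n = Ps {K..<j} c t n"
proof -
  have "{..<j} = {..<K} \<union> {K..<j}" using assms by auto
  then have "Ps {..<j} c t n = Ps ({..<K} \<union> {K..<j}) c t n" by simp
  also have "\<dots> = Ps {..<K} c t n + Ps {K..<j} c t n"
    unfolding Ps_def by (rule sum.union_disjoint) auto
  finally have "Ps {..<j} c t n = Ps {..<K} c t n + Ps {K..<j} c t n" .
  then show ?thesis by simp
qed

lemma Ps_bound:
  assumes "i \<le> j"
  shows "cmod (Ps {..<i} c t n) \<le> (\<Sum>k<j. cmod (c k))"
proof -
  have "cmod (Ps {..<i} c t n) \<le> (\<Sum>k<i. cmod (c k * chr (- t k) n))"
    unfolding Ps_def by (rule norm_sum)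
  also have "\<dots> = (\<Sum>k<i. cmod (c k))" by (simp add: norm_mult)
  also have "\<dots> \<le> (\<Sum>k<j. cmod (c k))" using assms by (intro sum_mono2) auto
  finally show ?thesis .
qed

lemma trig_poly_Ps: "finite S \<Longrightarrow> trig_poly (Ps S c t)"
  unfolding Ps_def using trig_poly_finite_sum[of S c "\<lambda>k. - t k"] by simp

lemma sm_shift: "summable (\<lambda>k. (cmod (c k))\<^sup>2) \<Longrightarrow> summable (\<lambda>k. (cmod (c (k + K)))\<^sup>2)"
  using summable_iff_shift[of "\<lambda>k. (cmod (c k))\<^sup>2" K] by simp

lemma tl_nonneg: "summable (\<lambda>k. (cmod (c k))\<^sup>2) \<Longrightarrow> 0 \<le> tlc c K"
  unfolding tlc_def by (rule suminf_nonneg) (simp_all add: sm_shift)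

lemma tl_ge:
  assumes "summable (\<lambda>k. (cmod (c k))\<^sup>2)"
  shows "(\<Sum>k\<in>{K..<j}. (cmod (c k))\<^sup>2) \<le> tlc c K"
proof (cases "K \<le> j")
  case True
  have "(\<Sum>k\<in>{K..<j}. (cmod (c k))\<^sup>2) = (\<Sum>k\<in>{0..<j-K}. (cmod (c (k + K)))\<^sup>2)"
    using sum.shift_bounds_nat_ivl[of "\<lambda>k. (cmod (c k))\<^sup>2" 0 K "j - K"] True by simp
  also have "\<dots> \<le> tlc c K" unfolding tlc_def
    by (rule sum_le_suminf) (use sm_shift[OF assms] in simp_all)
  finally show ?thesis .
next
  case False
  then show ?thesis using tl_nonneg[OF assms, of K] by simp
qed

lemma tl_small:
  assumes "summable (\<lambda>k. (cmod (c k))\<^sup>2)" "0 < r"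
  shows "\<exists>K0. \<forall>K\<ge>K0. tlc c K < r"
  using suminf_exist_split[OF assms(2,1)] tl_nonneg[OF assms(1)] unfolding tlc_def by auto

lemma avg_diff_lim:
  assumes g: "gh \<Psi> c t" and "K \<le> j"
  shows "(\<lambda>N. favg \<Psi> (\<lambda>n. (cmod (Ps {..<j} c t n - Ps {..<K} c t n))\<^sup>2) N) \<longlonglongrightarrow> (\<Sum>k\<in>{K..<j}. (cmod (c k))\<^sup>2)"
proof -
  have F: "foelner \<Psi>" and inj: "inj t" and rng: "\<And>k. 0 \<le> t k \<and> t k < 1"
    using g unfolding gh_def by blast+
  have "(\<lambda>N. favg \<Psi> (\<lambda>n. (cmod (Ps {K..<j} c t n))\<^sup>2) N) \<longlonglongrightarrow> (\<Sum>k\<in>{K..<j}. (cmod (c k))\<^sup>2)"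
    by (rule avg_Ps_norm_lim[OF F]) (use inj rng in \<open>auto simp: inj_on_def\<close>)
  then show ?thesis using Ps_split[OF assms(2)] by simp
qed

lemma gcond_ev:
  assumes g: "gh \<Psi> c t"
  shows "eventually (\<lambda>N. gcond \<Psi> c t j T N) sequentially"
proof -
  have F: "foelner \<Psi>" and sm: "summable (\<lambda>k. (cmod (c k))\<^sup>2)" using g unfolding gh_def by blast+
  have fne: "fne \<Psi>" using F by (rule foelner_fne)
  have jp: "0 < 1 / real (j+1)" by simp
  have e1: "eventually (\<lambda>N. \<forall>K\<in>{..j}. favg \<Psi> (\<lambda>n. (cmod (Ps {..<j} c t n - Ps {..<K} c t n))\<^sup>2) N \<le> tlc c K + 1 / real (j+1)) sequentially"
  proof (rule eventually_ball_finite)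
    show "\<forall>K\<in>{..j}. eventually (\<lambda>N. favg \<Psi> (\<lambda>n. (cmod (Ps {..<j} c t n - Ps {..<K} c t n))\<^sup>2) N \<le> tlc c K + 1 / real (j+1)) sequentially"
    proof
      fix K assume "K \<in> {..j}"
      then have Kj: "K \<le> j" by simp
      have "(\<Sum>k\<in>{K..<j}. (cmod (c k))\<^sup>2) < tlc c K + 1 / real (j+1)"
        using tl_ge[OF sm, of K j] jp by linarith
      from order_tendstoD(2)[OF avg_diff_lim[OF g Kj] this]
      show "eventually (\<lambda>N. favg \<Psi> (\<lambda>n. (cmod (Ps {..<j} c t n - Ps {..<K} c t n))\<^sup>2) N \<le> tlc c K + 1 / real (j+1)) sequentially"
        by (rule eventually_mono) simp
    qed
  qed simp
  have lim: "(\<lambda>N. real (card (\<Psi> N \<inter> {..<T})) / real (card (\<Psi> N)) * Cb c j) \<longlonglongrightarrow> 0"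
    using tendsto_mult[OF proportion_tendsto[OF F] tendsto_const[of "Cb c j"]] by simp
  have "eventually (\<lambda>N. real (card (\<Psi> N \<inter> {..<T})) / real (card (\<Psi> N)) * Cb c j < 1 / real (j+1)) sequentially"
    by (rule order_tendstoD(2)[OF lim jp])
  then have e2: "eventually (\<lambda>N. real (card (\<Psi> N \<inter> {..<T})) * Cb c j \<le> real (card (\<Psi> N)) / real (j+1)) sequentially"
  proof (rule eventually_mono)
    fix N assume h: "real (card (\<Psi> N \<inter> {..<T})) / real (card (\<Psi> N)) * Cb c j < 1 / real (j+1)"
    have cp: "0 < real (card (\<Psi> N))" using fne_card[OF fne] by simp
    have "real (card (\<Psi> N \<inter> {..<T})) * Cb c j = real (card (\<Psi> N)) * (real (card (\<Psi> N \<inter> {..<T})) / real (card (\<Psi> N)) * Cb c j)"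
      using cp by simp
    also have "\<dots> \<le> real (card (\<Psi> N)) * (1 / real (j+1))"
      using h cp by (intro mult_left_mono) simp_all
    finally show "real (card (\<Psi> N \<inter> {..<T})) * Cb c j \<le> real (card (\<Psi> N)) / real (j+1)" by simp
  qed
  show ?thesis using e1 e2 unfolding gcond_def by eventually_elim auto
qed

lemma pick_spec:
  assumes g: "gh \<Psi> c t"
  shows "prev < pick \<Psi> c t j T prev \<and> gcond \<Psi> c t j T (pick \<Psi> c t j T prev)"
proof -
  obtain N0 where N0: "\<And>N. N \<ge> N0 \<Longrightarrow> gcond \<Psi> c t j T N"
    using gcond_ev[OF g, of j T] unfolding eventually_sequentially by blast
  have "prev < max N0 (Suc prev) \<and> gcond \<Psi> c t j T (max N0 (Suc prev))" using N0 by simp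
  then show ?thesis unfolding pick_def by (rule someI)
qed

lemma Rg_facts:
  assumes g: "gh \<Psi> c t"
  shows "gcond \<Psi> c t j (Tb \<Psi> c t j) (tau \<Psi> c t j) \<and> Tb \<Psi> c t j < Tb \<Psi> c t (Suc j) \<and>
     (\<forall>n\<in>\<Psi> (tau \<Psi> c t j). n < Tb \<Psi> c t (Suc j)) \<and> tau \<Psi> c t j < tau \<Psi> c t (Suc j)"
proof -
  have fin: "finite (\<Psi> N)" for N using g unfolding gh_def by (blast intro: fne_finite foelner_fne)
  have A: "gcond \<Psi> c t j (Tb \<Psi> c t j) (tau \<Psi> c t j)"
    by (cases j) (simp_all add: tau_def Tb_def pick_spec[OF g])
  have B: "Tb \<Psi> c t (Suc j) = Max (insert (Tb \<Psi> c t j) (\<Psi> (tau \<Psi> c t j))) + 1"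
    by (cases j) (simp_all add: tau_def Tb_def)
  have C: "Tb \<Psi> c t j < Tb \<Psi> c t (Suc j)" unfolding B using fin by (simp add: le_imp_less_Suc)
  have D: "\<forall>n\<in>\<Psi> (tau \<Psi> c t j). n < Tb \<Psi> c t (Suc j)" unfolding B using fin by (simp add: le_imp_less_Suc)
  have E: "tau \<Psi> c t j < tau \<Psi> c t (Suc j)"
    by (simp add: tau_def pick_spec[OF g])
  show ?thesis using A C D E by blast
qed

lemma Tb_mono:
  assumes g: "gh \<Psi> c t"
  shows "strict_mono (Tb \<Psi> c t)"
  unfolding strict_mono_Suc_iff using Rg_facts[OF g] by blast

lemma tau_mono:
  assumes g: "gh \<Psi> c t"
  shows "strict_mono (tau \<Psi> c t)"
  unfolding strict_mono_Suc_iff using Rg_facts[OF g] by blast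

lemma Tb_0: "Tb \<Psi> c t 0 = 0" by (simp add: Tb_def)

lemma Jb_eq:
  assumes g: "gh \<Psi> c t" and "Tb \<Psi> c t j \<le> n" "n < Tb \<Psi> c t (Suc j)"
  shows "Jb \<Psi> c t n = j"
  unfolding Jb_def
proof (rule Least_equality)
  show "n < Tb \<Psi> c t (Suc j)" by fact
  fix y assume y: "n < Tb \<Psi> c t (Suc y)"
  show "j \<le> y"
  proof (rule ccontr)
    assume "\<not> j \<le> y"
    then have "Suc y \<le> j" by simp
    then have "Tb \<Psi> c t (Suc y) \<le> Tb \<Psi> c t j"
      using strict_mono_mono[OF Tb_mono[OF g]] by (simp add: monoD)
    then show False using y assms(2) by simp
  qed
qed

lemma Jb_lt:
  assumes "n < Tb \<Psi> c t j"
  shows "Jb \<Psi> c t n < j"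
proof (cases j)
  case 0
  then show ?thesis using assms by (simp add: Tb_0)
next
  case (Suc i)
  then have "Jb \<Psi> c t n \<le> i" unfolding Jb_def using assms by (intro Least_le) simp
  then show ?thesis using Suc by simp
qed

lemma key_est:
  assumes g: "gh \<Psi> c t" and Kj: "K \<le> j"
  shows "favg \<Psi> (\<lambda>n. (cmod (fBg \<Psi> c t n - Ps {..<K} c t n))\<^sup>2) (tau \<Psi> c t j) \<le> tlc c K + 2 / real (j+1)"
proof -
  have F: "foelner \<Psi>" using g unfolding gh_def by blast
  have fne: "fne \<Psi>" using F by (rule foelner_fne)
  let ?X = "\<Psi> (tau \<Psi> c t j)"
  let ?T = "Tb \<Psi> c t j"
  let ?h = "\<lambda>n. (cmod (fBg \<Psi> c t n - Ps {..<K} c t n))\<^sup>2"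
  let ?d = "\<lambda>n. (cmod (Ps {..<j} c t n - Ps {..<K} c t n))\<^sup>2"
  have fin: "finite ?X" using fne by (rule fne_finite)
  have cX: "0 < real (card ?X)" using fne_card[OF fne] by simp
  obtain gc: "gcond \<Psi> c t j ?T (tau \<Psi> c t j)" and up: "\<forall>n\<in>?X. n < Tb \<Psi> c t (Suc j)"
    using Rg_facts[OF g, of j] by blast
  have gc1: "favg \<Psi> ?d (tau \<Psi> c t j) \<le> tlc c K + 1 / real (j+1)"
    using gc Kj unfolding gcond_def by blast
  have gc2: "real (card (?X \<inter> {..<?T})) * Cb c j \<le> real (card ?X) / real (j+1)"
    using gc unfolding gcond_def by blast
  have sumX: "sum ?h ?X = sum ?h (?X \<inter> {..<?T}) + sum ?h (?X - {..<?T})"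
    using fin by (rule sum.Int_Diff)
  have s1: "sum ?h (?X \<inter> {..<?T}) \<le> real (card (?X \<inter> {..<?T})) * Cb c j"
  proof -
    have "?h n \<le> Cb c j" if "n \<in> ?X \<inter> {..<?T}" for n
    proof -
      have "Jb \<Psi> c t n < j" using that by (intro Jb_lt) simp
      then have a: "cmod (fBg \<Psi> c t n) \<le> (\<Sum>k<j. cmod (c k))"
        unfolding fBg_def by (intro Ps_bound) simp
      have b: "cmod (Ps {..<K} c t n) \<le> (\<Sum>k<j. cmod (c k))" using Kj by (rule Ps_bound)
      have "cmod (fBg \<Psi> c t n - Ps {..<K} c t n) \<le> cmod (fBg \<Psi> c t n) + cmod (Ps {..<K} c t n)"
        by (rule norm_triangle_ineq4)
      also have "\<dots> \<le> 2 * (\<Sum>k<j. cmod (c k))" using a b by simp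
      finally show ?thesis unfolding Cb_def by (intro power_mono) simp_all
    qed
    then have "sum ?h (?X \<inter> {..<?T}) \<le> (\<Sum>n\<in>?X \<inter> {..<?T}. Cb c j)" by (intro sum_mono) blast
    then show ?thesis by simp
  qed
  have s2: "sum ?h (?X - {..<?T}) \<le> sum ?d ?X"
  proof -
    have "sum ?h (?X - {..<?T}) = sum ?d (?X - {..<?T})"
    proof (rule sum.cong[OF refl])
      fix n assume "n \<in> ?X - {..<?T}"
      then have "Jb \<Psi> c t n = j" using up by (intro Jb_eq[OF g]) auto
      then show "?h n = ?d n" unfolding fBg_def by simp
    qed
    also have "\<dots> \<le> sum ?d ?X" by (rule sum_mono2) (use fin in auto)
    finally show ?thesis .
  qed
  have "favg \<Psi> ?d (tau \<Psi> c t j) = sum ?d ?X / real (card ?X)" unfolding favg_def by simp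
  then have s3: "sum ?d ?X \<le> real (card ?X) * (tlc c K + 1 / real (j+1))"
    using gc1 cX by (simp add: divide_le_eq mult.commute)
  have "sum ?h ?X \<le> real (card ?X) / real (j+1) + real (card ?X) * (tlc c K + 1 / real (j+1))"
    using sumX s1 s2 s3 gc2 by linarith
  also have "\<dots> = real (card ?X) * (tlc c K + 2 / real (j+1))"
  proof -
    have eq: "x / d + x * (y + 1 / d) = x * (y + 2 / d)" if "d > 0" for x y d :: real
      using that by (simp add: field_simps)
    show ?thesis by (rule eq) simp
  qed
  finally have "sum ?h ?X / real (card ?X) \<le> tlc c K + 2 / real (j+1)"
    using cX by (simp add: divide_le_eq mult.commute)
  then show ?thesis unfolding favg_def by simp
qed

lemma sqnorm_glue:
  assumes g: "gh \<Psi> c t"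
  shows "sqnorm (\<Psi> \<circ> tau \<Psi> c t) (\<lambda>n. fBg \<Psi> c t n - Ps {..<K} c t n) \<le> ereal (tlc c K + 2 / real (K+1))"
proof (rule sqnorm_le)
  show "eventually (\<lambda>N. favg (\<Psi> \<circ> tau \<Psi> c t) (\<lambda>n. (cmod (fBg \<Psi> c t n - Ps {..<K} c t n))\<^sup>2) N \<le> tlc c K + 2 / real (K+1)) sequentially"
    unfolding eventually_sequentially
  proof (intro exI allI impI)
    fix N assume KN: "K \<le> N"
    have "favg (\<Psi> \<circ> tau \<Psi> c t) (\<lambda>n. (cmod (fBg \<Psi> c t n - Ps {..<K} c t n))\<^sup>2) N \<le> tlc c K + 2 / real (N+1)"
      unfolding favg_comp by (rule key_est[OF g KN])
    also have "2 / real (N+1) \<le> 2 / real (K+1)" using KN by (intro divide_left_mono) simp_all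
    finally show "favg (\<Psi> \<circ> tau \<Psi> c t) (\<lambda>n. (cmod (fBg \<Psi> c t n - Ps {..<K} c t n))\<^sup>2) N \<le> tlc c K + 2 / real (K+1)"
      by simp
  qed
qed

lemma Bes_perp_iff:
  "g \<in> Bes_perp \<Psi> \<longleftrightarrow> g \<in> L2 \<Psi> \<and> (\<forall>\<theta>. 0 \<le> \<theta> \<and> \<theta> < 1 \<longrightarrow> coef \<Psi> g \<theta> \<longlonglongrightarrow> 0)"
proof -
  have "exp (2 * of_real pi * \<i> * of_nat n * of_real \<theta>) = chr \<theta> n" for n \<theta>
    unfolding chr_def by (simp add: mult_ac)
  then show ?thesis unfolding Bes_perp_def coef_def by simp
qed

lemma sq_diff_le: "(cmod (a - b))\<^sup>2 \<le> 2 * (cmod a)\<^sup>2 + 2 * (cmod b)\<^sup>2"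
proof -
  have "cmod (a - b) \<le> cmod a + cmod b" by (rule norm_triangle_ineq4)
  then have "(cmod (a - b))\<^sup>2 \<le> (cmod a + cmod b)\<^sup>2" by (intro power_mono) simp_all
  also have "\<dots> \<le> 2 * (cmod a)\<^sup>2 + 2 * (cmod b)\<^sup>2"
    using sum_squares_bound[of "cmod a" "cmod b"] by (simp add: power2_eq_square algebra_simps)
  finally show ?thesis .
qed

lemma favg_sq_diff_le:
  "favg \<Psi> (\<lambda>n. (cmod (a n - b n))\<^sup>2) N \<le> 2 * favg \<Psi> (\<lambda>n. (cmod (a n))\<^sup>2) N + 2 * favg \<Psi> (\<lambda>n. (cmod (b n))\<^sup>2) N"
proof -
  have "favg \<Psi> (\<lambda>n. (cmod (a n - b n))\<^sup>2) N \<le> favg \<Psi> (\<lambda>n. 2 * (cmod (a n))\<^sup>2 + 2 * (cmod (b n))\<^sup>2) N"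
    by (rule favg_mono) (rule sq_diff_le)
  also have "\<dots> = 2 * favg \<Psi> (\<lambda>n. (cmod (a n))\<^sup>2) N + 2 * favg \<Psi> (\<lambda>n. (cmod (b n))\<^sup>2) N"
    by (simp only: favg_add favg_cmult)
  finally show ?thesis .
qed

lemma Bes_ev_bound:
  assumes "h \<in> Bes \<Psi>"
  obtains r where "eventually (\<lambda>N. favg \<Psi> (\<lambda>n. (cmod (h n))\<^sup>2) N \<le> r) sequentially"
proof -
  have "\<forall>\<epsilon>>0. \<exists>a. trig_poly a \<and> sqnorm \<Psi> (\<lambda>n. h n - a n) < ereal (\<epsilon>\<^sup>2)"
    using assms unfolding Bes_def by simp
  from this[rule_format, OF zero_less_one] obtain a where a: "trig_poly a" "sqnorm \<Psi> (\<lambda>n. h n - a n) < ereal (1\<^sup>2)"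
    by blast
  obtain M where M: "\<And>n. cmod (a n) \<le> M" using trig_poly_bounded[OF a(1)] by blast
  have ev: "eventually (\<lambda>N. favg \<Psi> (\<lambda>n. (cmod (h n - a n))\<^sup>2) N < 1) sequentially"
    using sqnorm_lessD[OF a(2)] by simp
  have "eventually (\<lambda>N. favg \<Psi> (\<lambda>n. (cmod (h n))\<^sup>2) N \<le> 2 * 1 + 2 * M\<^sup>2) sequentially"
    using ev
  proof (rule eventually_mono)
    fix N assume h1: "favg \<Psi> (\<lambda>n. (cmod (h n - a n))\<^sup>2) N < 1"
    have "favg \<Psi> (\<lambda>n. (cmod (h n))\<^sup>2) N = favg \<Psi> (\<lambda>n. (cmod ((h n - a n) - (- a n)))\<^sup>2) N" by simp
    also have "\<dots> \<le> 2 * favg \<Psi> (\<lambda>n. (cmod (h n - a n))\<^sup>2) N + 2 * favg \<Psi> (\<lambda>n. (cmod (- a n))\<^sup>2) N"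
      by (rule favg_sq_diff_le)
    also have "favg \<Psi> (\<lambda>n. (cmod (- a n))\<^sup>2) N \<le> favg \<Psi> (\<lambda>n. M\<^sup>2) N"
      by (rule favg_mono) (use M in \<open>auto intro: power_mono\<close>)
    also have "favg \<Psi> (\<lambda>n. M\<^sup>2) N \<le> M\<^sup>2"
      unfolding favg_def by (simp add: divide_le_eq)
    finally show "favg \<Psi> (\<lambda>n. (cmod (h n))\<^sup>2) N \<le> 2 * 1 + 2 * M\<^sup>2" using h1 by linarith
  qed
  then show ?thesis using that by blast
qed

lemma Bes_L2:
  assumes "h \<in> Bes \<Psi>"
  shows "h \<in> L2 \<Psi>"
proof -
  obtain r where "eventually (\<lambda>N. favg \<Psi> (\<lambda>n. (cmod (h n))\<^sup>2) N \<le> r) sequentially"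
    using Bes_ev_bound[OF assms] by blast
  then show ?thesis by (intro L2_I sqnorm_le)
qed

lemma fBg_Bes:
  assumes g: "gh \<Psi> c t"
  shows "fBg \<Psi> c t \<in> Bes (\<Psi> \<circ> tau \<Psi> c t)"
  unfolding Bes_def
proof (intro CollectI allI impI)
  fix \<epsilon> :: real assume e: "\<epsilon> > 0"
  have sm: "summable (\<lambda>k. (cmod (c k))\<^sup>2)" using g unfolding gh_def by blast
  have e2: "\<epsilon>\<^sup>2 / 2 > 0" using e by simp
  obtain K1 where K1: "\<And>K. K \<ge> K1 \<Longrightarrow> tlc c K < \<epsilon>\<^sup>2 / 2" using tl_small[OF sm e2] by blast
  obtain K2 :: nat where K2: "4 / \<epsilon>\<^sup>2 < real K2" using reals_Archimedean2 by blast
  define K where "K = max K1 K2"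
  have "tlc c K < \<epsilon>\<^sup>2 / 2" using K1 unfolding K_def by simp
  moreover have "2 / real (K+1) < \<epsilon>\<^sup>2 / 2"
  proof -
    have "4 / \<epsilon>\<^sup>2 < real (K+1)" using K2 unfolding K_def by simp
    then have "4 < \<epsilon>\<^sup>2 * real (K+1)" using e by (simp add: divide_less_eq mult.commute)
    then show ?thesis by (simp add: divide_less_eq field_simps)
  qed
  ultimately have lt: "tlc c K + 2 / real (K+1) < \<epsilon>\<^sup>2" by simp
  have "sqnorm (\<Psi> \<circ> tau \<Psi> c t) (\<lambda>n. fBg \<Psi> c t n - Ps {..<K} c t n) < ereal (\<epsilon>\<^sup>2)"
    using sqnorm_glue[OF g, of K] lt by (simp add: le_less_trans)
  moreover have "trig_poly (Ps {..<K} c t)" by (rule trig_poly_Ps) simp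
  ultimately show "\<exists>a. trig_poly a \<and> sqnorm (\<Psi> \<circ> tau \<Psi> c t) (\<lambda>n. fBg \<Psi> c t n - a n) < ereal (\<epsilon>\<^sup>2)"
    by blast
qed

lemma coef_diff: "coef \<Psi> (\<lambda>n. a n - b n) \<theta> N = coef \<Psi> a \<theta> N - coef \<Psi> b \<theta> N"
  unfolding coef_def by (simp add: favg_diff algebra_simps)

lemma coef_diff_fun: "coef \<Psi> (\<lambda>n. a n - b n) \<theta> = (\<lambda>N. coef \<Psi> a \<theta> N - coef \<Psi> b \<theta> N)"
  by (rule ext) (rule coef_diff)

lemma coef_Ps: "coef \<Psi> (Ps S c t) \<theta> N = (\<Sum>k\<in>S. c k * favg \<Psi> (chr (\<theta> - t k)) N)"
proof -
  have "(\<lambda>n. Ps S c t n * chr \<theta> n) = (\<lambda>n. \<Sum>k\<in>S. c k * chr (\<theta> - t k) n)"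
  proof
    fix n
    have "Ps S c t n * chr \<theta> n = (\<Sum>k\<in>S. c k * (chr (- t k) n * chr \<theta> n))"
      unfolding Ps_def by (simp add: sum_distrib_right mult.assoc)
    also have "\<dots> = (\<Sum>k\<in>S. c k * chr (\<theta> - t k) n)" by (simp add: chr_mult)
    finally show "Ps S c t n * chr \<theta> n = (\<Sum>k\<in>S. c k * chr (\<theta> - t k) n)" .
  qed
  then show ?thesis unfolding coef_def by (simp add: favg_sum favg_cmult)
qed

lemma coef_f_PK:
  assumes g: "gh \<Psi> c t" and lim: "\<And>k. coef \<Psi> f (t k) \<longlonglongrightarrow> c k"
    and zero: "\<And>\<theta>. 0 \<le> \<theta> \<Longrightarrow> \<theta> < 1 \<Longrightarrow> \<theta> \<notin> range t \<Longrightarrow> coef \<Psi> f \<theta> \<longlonglongrightarrow> 0"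
    and th: "0 \<le> \<theta>" "\<theta> < 1" and K: "\<And>k. \<theta> = t k \<Longrightarrow> k < K"
  shows "coef \<Psi> (\<lambda>n. f n - Ps {..<K} c t n) \<theta> \<longlonglongrightarrow> 0"
proof -
  have F: "foelner \<Psi>" and inj: "inj t" and rng: "\<And>k. 0 \<le> t k \<and> t k < 1"
    using g unfolding gh_def by blast+
  have limP: "coef \<Psi> (Ps {..<K} c t) \<theta> \<longlonglongrightarrow> (\<Sum>k<K. c k * (if \<theta> = t k then 1 else 0))"
    unfolding coef_Ps
    by (intro tendsto_sum tendsto_mult tendsto_const avg_chr_lim[OF F th]) (use rng in auto)
  show ?thesis
  proof (cases "\<theta> \<in> range t")
    case True
    then obtain k0 where k0: "\<theta> = t k0" by blast
    have "(\<Sum>k<K. c k * (if \<theta> = t k then 1 else 0)) = (\<Sum>k<K. if k = k0 then c k else 0)"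
    proof (rule sum.cong[OF refl])
      fix k
      have "(\<theta> = t k) = (k = k0)" using inj k0 by (auto simp: inj_def)
      then show "c k * (if \<theta> = t k then 1 else 0) = (if k = k0 then c k else 0)" by simp
    qed
    also have "\<dots> = c k0" using K[OF k0] by simp
    finally have "coef \<Psi> (Ps {..<K} c t) \<theta> \<longlonglongrightarrow> c k0" using limP by simp
    then have "(\<lambda>N. coef \<Psi> f \<theta> N - coef \<Psi> (Ps {..<K} c t) \<theta> N) \<longlonglongrightarrow> c k0 - c k0"
      using lim[of k0] k0 by (intro tendsto_diff) simp_all
    then show ?thesis unfolding coef_diff_fun by simp
  next
    case False
    have "(\<Sum>k<K. c k * (if \<theta> = t k then 1 else 0)) = 0" using False by (intro sum.neutral) auto
    then have "coef \<Psi> (Ps {..<K} c t) \<theta> \<longlonglongrightarrow> 0" using limP by simp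
    then have "(\<lambda>N. coef \<Psi> f \<theta> N - coef \<Psi> (Ps {..<K} c t) \<theta> N) \<longlonglongrightarrow> 0 - 0"
      using zero[OF th False] by (intro tendsto_diff)
    then show ?thesis unfolding coef_diff_fun by simp
  qed
qed

lemma coef_small:
  assumes fne: "fne \<Psi>" and e: "\<epsilon> > 0" and a: "favg \<Psi> (\<lambda>n. (cmod (h n))\<^sup>2) N < \<epsilon>\<^sup>2 / 4"
  shows "cmod (coef \<Psi> h \<theta> N) < \<epsilon> / 2"
proof -
  have "cnj (chr (-\<theta>) n) = chr \<theta> n" for n by (simp add: cnj_chr)
  then have "coef \<Psi> h \<theta> N = favg \<Psi> (\<lambda>n. h n * cnj (chr (-\<theta>) n)) N"
    unfolding coef_def by simp
  also have "cmod \<dots> \<le> ((2/\<epsilon>) * favg \<Psi> (\<lambda>n. (cmod (h n))\<^sup>2) N + favg \<Psi> (\<lambda>n. (cmod (chr (-\<theta>) n))\<^sup>2) N / (2/\<epsilon>)) / 2"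
    by (rule cs_avg) (use e in simp)
  also have "favg \<Psi> (\<lambda>n. (cmod (chr (-\<theta>) n))\<^sup>2) N = 1"
    using favg_const[OF fne, of "1::real" N] by simp
  also have "(2/\<epsilon>) * favg \<Psi> (\<lambda>n. (cmod (h n))\<^sup>2) N < (2/\<epsilon>) * (\<epsilon>\<^sup>2 / 4)"
    using a e by (intro mult_strict_left_mono) simp_all
  then have "((2/\<epsilon>) * favg \<Psi> (\<lambda>n. (cmod (h n))\<^sup>2) N + 1 / (2/\<epsilon>)) / 2 < ((2/\<epsilon>) * (\<epsilon>\<^sup>2 / 4) + 1 / (2/\<epsilon>)) / 2"
    by simp
  also have "((2/\<epsilon>) * (\<epsilon>\<^sup>2 / 4) + 1 / (2/\<epsilon>)) / 2 = \<epsilon> / 2"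
    using e by (simp add: power2_eq_square field_simps)
  finally show ?thesis by simp
qed

lemma K_exists:
  assumes sm: "summable (\<lambda>k. (cmod (c k))\<^sup>2)" and e: "e > 0"
  shows "\<exists>K0. \<forall>K\<ge>K0. tlc c K + 2 / real (K+1) < e"
proof -
  have e2: "e / 2 > 0" using e by simp
  obtain K1 where K1: "\<And>K. K \<ge> K1 \<Longrightarrow> tlc c K < e / 2" using tl_small[OF sm e2] by blast
  obtain K2 :: nat where K2: "4 / e < real K2" using reals_Archimedean2 by blast
  have "tlc c K + 2 / real (K+1) < e" if K: "K \<ge> max K1 K2" for K
  proof -
    have "tlc c K < e / 2" using K1 K by simp
    moreover have "2 / real (K+1) < e / 2"
    proof -
      have "4 / e < real (K+1)" using K2 K by simp
      then have "4 < e * real (K+1)" using e by (simp add: divide_less_eq mult.commute)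
      moreover have "2 / real (K+1) < e / 2 \<longleftrightarrow> 4 < e * real (K+1)"
        by (simp add: field_simps)
      ultimately show ?thesis by simp
    qed
    ultimately show ?thesis by simp
  qed
  then show ?thesis by blast
qed

lemma L2_ev: "g \<in> L2 \<Psi> \<Longrightarrow> \<exists>r. eventually (\<lambda>N. favg \<Psi> (\<lambda>n. (cmod (g n))\<^sup>2) N \<le> r) sequentially"
  by (metis (mono_tags, lifting) L2_ev_bound eventually_mono less_imp_le)

lemma L2_diff:
  assumes "a \<in> L2 \<Psi>" "b \<in> L2 \<Psi>"
  shows "(\<lambda>n. a n - b n) \<in> L2 \<Psi>"
proof -
  obtain r1 where r1: "eventually (\<lambda>N. favg \<Psi> (\<lambda>n. (cmod (a n))\<^sup>2) N \<le> r1) sequentially"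
    using L2_ev[OF assms(1)] by blast
  obtain r2 where r2: "eventually (\<lambda>N. favg \<Psi> (\<lambda>n. (cmod (b n))\<^sup>2) N \<le> r2) sequentially"
    using L2_ev[OF assms(2)] by blast
  have "eventually (\<lambda>N. favg \<Psi> (\<lambda>n. (cmod (a n - b n))\<^sup>2) N \<le> 2 * r1 + 2 * r2) sequentially"
    using r1 r2
  proof eventually_elim
    case (elim N)
    then show ?case using favg_sq_diff_le[of \<Psi> a b N] by linarith
  qed
  then show ?thesis by (intro L2_I sqnorm_le)
qed

lemma fA_perp:
  assumes g: "gh \<Psi> c t" and lim: "\<And>k. coef \<Psi> f (t k) \<longlonglongrightarrow> c k"
    and zero: "\<And>\<theta>. 0 \<le> \<theta> \<Longrightarrow> \<theta> < 1 \<Longrightarrow> \<theta> \<notin> range t \<Longrightarrow> coef \<Psi> f \<theta> \<longlonglongrightarrow> 0"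
    and B: "\<And>N. favg \<Psi> (\<lambda>n. (cmod (f n))\<^sup>2) N \<le> B"
  shows "(\<lambda>n. f n - fBg \<Psi> c t n) \<in> Bes_perp (\<Psi> \<circ> tau \<Psi> c t)"
proof -
  have F: "foelner \<Psi>" and inj: "inj t" and sm: "summable (\<lambda>k. (cmod (c k))\<^sup>2)"
    using g unfolding gh_def by blast+
  let ?\<tau> = "tau \<Psi> c t"
  let ?P = "\<lambda>\<Psi>'. \<Psi>'"
  have tm: "strict_mono ?\<tau>" using g by (rule tau_mono)
  have fne': "fne (\<Psi> \<circ> ?\<tau>)" using F by (intro fne_comp foelner_fne)
  have P0: "Ps {..<0} c t n = 0" for n by (simp add: Ps_def)
  have L2: "(\<lambda>n. f n - fBg \<Psi> c t n) \<in> L2 (\<Psi> \<circ> ?\<tau>)"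
  proof -
    have "sqnorm (\<Psi> \<circ> ?\<tau>) (\<lambda>n. fBg \<Psi> c t n - Ps {..<0} c t n) < ereal (tlc c 0 + 3)"
      using sqnorm_glue[OF g, of 0] by (simp add: le_less_trans)
    from sqnorm_lessD[OF this]
    have ev: "eventually (\<lambda>N. favg (\<Psi> \<circ> ?\<tau>) (\<lambda>n. (cmod (fBg \<Psi> c t n))\<^sup>2) N < tlc c 0 + 3) sequentially"
      by (simp add: Ps_def)
    have "eventually (\<lambda>N. favg (\<Psi> \<circ> ?\<tau>) (\<lambda>n. (cmod (f n - fBg \<Psi> c t n))\<^sup>2) N \<le> 2 * B + 2 * (tlc c 0 + 3)) sequentially"
      using ev
    proof (rule eventually_mono)
      fix N assume h: "favg (\<Psi> \<circ> ?\<tau>) (\<lambda>n. (cmod (fBg \<Psi> c t n))\<^sup>2) N < tlc c 0 + 3"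
      have hB: "favg (\<Psi> \<circ> ?\<tau>) (\<lambda>n. (cmod (f n))\<^sup>2) N \<le> B" unfolding favg_comp by (rule B)
      have "favg (\<Psi> \<circ> ?\<tau>) (\<lambda>n. (cmod (f n - fBg \<Psi> c t n))\<^sup>2) N
          \<le> 2 * favg (\<Psi> \<circ> ?\<tau>) (\<lambda>n. (cmod (f n))\<^sup>2) N + 2 * favg (\<Psi> \<circ> ?\<tau>) (\<lambda>n. (cmod (fBg \<Psi> c t n))\<^sup>2) N"
        by (rule favg_sq_diff_le)
      also have "\<dots> \<le> 2 * B + 2 * (tlc c 0 + 3)"
        using hB h by (intro add_mono mult_left_mono) simp_all
      finally show "favg (\<Psi> \<circ> ?\<tau>) (\<lambda>n. (cmod (f n - fBg \<Psi> c t n))\<^sup>2) N \<le> 2 * B + 2 * (tlc c 0 + 3)" .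
    qed
    then show ?thesis by (intro L2_I sqnorm_le)
  qed
  have conv: "coef (\<Psi> \<circ> ?\<tau>) (\<lambda>n. f n - fBg \<Psi> c t n) \<theta> \<longlonglongrightarrow> 0" if th: "0 \<le> \<theta>" "\<theta> < 1" for \<theta>
  proof (rule LIMSEQ_I)
    fix r :: real assume r: "0 < r"
    have r4: "r\<^sup>2 / 4 > 0" using r by simp
    obtain K0 where K0: "\<And>K. K \<ge> K0 \<Longrightarrow> tlc c K + 2 / real (K+1) < r\<^sup>2 / 4"
      using K_exists[OF sm r4] by blast
    define K where "K = max K0 (if \<theta> \<in> range t then Suc (inv t \<theta>) else 0)"
    have Kth: "k < K" if "\<theta> = t k" for k
    proof -
      have "inv t \<theta> = k" using that inj by simp
      then show ?thesis unfolding K_def using that by auto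
    qed
    have "sqnorm (\<Psi> \<circ> ?\<tau>) (\<lambda>n. fBg \<Psi> c t n - Ps {..<K} c t n) < ereal (r\<^sup>2 / 4)"
      using sqnorm_glue[OF g, of K] K0[of K] unfolding K_def by (simp add: le_less_trans)
    from sqnorm_lessD[OF this]
    have ev1: "eventually (\<lambda>N. cmod (coef (\<Psi> \<circ> ?\<tau>) (\<lambda>n. fBg \<Psi> c t n - Ps {..<K} c t n) \<theta> N) < r / 2) sequentially"
      by (rule eventually_mono) (rule coef_small[OF fne' r])
    have "coef \<Psi> (\<lambda>n. f n - Ps {..<K} c t n) \<theta> \<longlonglongrightarrow> 0"
      by (rule coef_f_PK[OF g lim zero th Kth])
    from LIMSEQ_subseq_LIMSEQ[OF this tm]
    have "coef (\<Psi> \<circ> ?\<tau>) (\<lambda>n. f n - Ps {..<K} c t n) \<theta> \<longlonglongrightarrow> 0"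
      unfolding coef_comp_fun by (simp add: o_def)
    then have nlim: "(\<lambda>N. cmod (coef (\<Psi> \<circ> ?\<tau>) (\<lambda>n. f n - Ps {..<K} c t n) \<theta> N)) \<longlonglongrightarrow> 0"
      by (rule tendsto_norm_zero)
    have r2: "0 < r / 2" using r by simp
    have ev2: "eventually (\<lambda>N. cmod (coef (\<Psi> \<circ> ?\<tau>) (\<lambda>n. f n - Ps {..<K} c t n) \<theta> N) < r / 2) sequentially"
      by (rule order_tendstoD(2)[OF nlim r2])
    have eq: "coef (\<Psi> \<circ> ?\<tau>) (\<lambda>n. f n - fBg \<Psi> c t n) \<theta> N =
       coef (\<Psi> \<circ> ?\<tau>) (\<lambda>n. f n - Ps {..<K} c t n) \<theta> N - coef (\<Psi> \<circ> ?\<tau>) (\<lambda>n. fBg \<Psi> c t n - Ps {..<K} c t n) \<theta> N" for N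
    proof -
      have "(\<lambda>n. f n - fBg \<Psi> c t n) = (\<lambda>n. (f n - Ps {..<K} c t n) - (fBg \<Psi> c t n - Ps {..<K} c t n))"
        by simp
      then show ?thesis by (simp only: coef_diff)
    qed
    have "eventually (\<lambda>N. norm (coef (\<Psi> \<circ> ?\<tau>) (\<lambda>n. f n - fBg \<Psi> c t n) \<theta> N - 0) < r) sequentially"
      using ev1 ev2
    proof eventually_elim
      case (elim N)
      have "norm (coef (\<Psi> \<circ> ?\<tau>) (\<lambda>n. f n - fBg \<Psi> c t n) \<theta> N) \<le>
          cmod (coef (\<Psi> \<circ> ?\<tau>) (\<lambda>n. f n - Ps {..<K} c t n) \<theta> N) + cmod (coef (\<Psi> \<circ> ?\<tau>) (\<lambda>n. fBg \<Psi> c t n - Ps {..<K} c t n) \<theta> N)"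
        unfolding eq by (rule norm_triangle_ineq4)
      then show ?case using elim by simp
    qed
    then show "\<exists>no. \<forall>n\<ge>no. norm (coef (\<Psi> \<circ> ?\<tau>) (\<lambda>n. f n - fBg \<Psi> c t n) \<theta> n - 0) < r"
      unfolding eventually_sequentially .
  qed
  show ?thesis unfolding Bes_perp_iff using L2 conv by blast
qed

lemma perp_trig:
  assumes A: "fA \<in> Bes_perp \<Psi>" and a: "trig_poly a"
  shows "(\<lambda>N. favg \<Psi> (\<lambda>n. fA n * cnj (a n)) N) \<longlonglongrightarrow> 0"
proof -
  obtain S :: "nat set" and c \<theta> where "finite S" and a_eq: "a = (\<lambda>n. \<Sum>j\<in>S. c j * chr (\<theta> j) n)"
    using trig_polyE[OF a] by metis
  have cz: "\<And>\<phi>. 0 \<le> \<phi> \<Longrightarrow> \<phi> < 1 \<Longrightarrow> coef \<Psi> fA \<phi> \<longlonglongrightarrow> 0" using A unfolding Bes_perp_iff by blast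
  have eq: "favg \<Psi> (\<lambda>n. fA n * cnj (a n)) N = (\<Sum>j\<in>S. cnj (c j) * coef \<Psi> fA (frac (- \<theta> j)) N)" for N
  proof -
    have "(\<lambda>n. fA n * cnj (a n)) = (\<lambda>n. \<Sum>j\<in>S. cnj (c j) * (fA n * chr (frac (- \<theta> j)) n))"
    proof
      fix n
      have "fA n * cnj (a n) = (\<Sum>j\<in>S. cnj (c j) * (fA n * chr (- \<theta> j) n))"
        unfolding a_eq by (simp add: cnj_chr sum_distrib_left mult_ac)
      then show "fA n * cnj (a n) = (\<Sum>j\<in>S. cnj (c j) * (fA n * chr (frac (- \<theta> j)) n))"
        by (simp add: chr_frac)
    qed
    then show ?thesis unfolding coef_def by (simp add: favg_sum favg_cmult)
  qed
  have "(\<lambda>N. \<Sum>j\<in>S. cnj (c j) * coef \<Psi> fA (frac (- \<theta> j)) N) \<longlonglongrightarrow> (\<Sum>j\<in>S. cnj (c j) * 0)"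
    by (intro tendsto_sum tendsto_mult tendsto_const cz) (simp_all add: frac_lt_1)
  then show ?thesis unfolding eq by simp
qed

lemma perp_cross:
  assumes fne: "fne \<Psi>" and A: "fA \<in> Bes_perp \<Psi>" and h: "h \<in> Bes \<Psi>"
  shows "(\<lambda>N. favg \<Psi> (\<lambda>n. fA n * cnj (h n)) N) \<longlonglongrightarrow> 0"
proof (rule LIMSEQ_I)
  fix r :: real assume r: "0 < r"
  have "fA \<in> L2 \<Psi>" using A unfolding Bes_perp_iff by blast
  then obtain R where R: "eventually (\<lambda>N. favg \<Psi> (\<lambda>n. (cmod (fA n))\<^sup>2) N \<le> R) sequentially"
    using L2_ev by blast
  define R' where "R' = \<bar>R\<bar> + 1"
  have R'p: "R' > 0" unfolding R'_def by simp
  define s where "s = r / (2 * R')"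
  have sp: "s > 0" unfolding s_def using r R'p by simp
  define \<delta> where "\<delta> = min 1 (r * s / 2)"
  have dp: "\<delta> > 0" unfolding \<delta>_def using r sp by simp
  have d2: "\<delta>\<^sup>2 \<le> r * s / 2"
  proof -
    have "\<delta> * \<delta> \<le> 1 * \<delta>" using dp by (intro mult_right_mono) (simp_all add: \<delta>_def)
    then have "\<delta>\<^sup>2 \<le> \<delta>" by (simp add: power2_eq_square)
    also have "\<delta> \<le> r * s / 2" unfolding \<delta>_def by simp
    finally show ?thesis .
  qed
  have "\<forall>\<epsilon>>0. \<exists>a. trig_poly a \<and> sqnorm \<Psi> (\<lambda>n. h n - a n) < ereal (\<epsilon>\<^sup>2)"
    using h unfolding Bes_def by simp
  from this[rule_format, OF dp] obtain a where a: "trig_poly a" "sqnorm \<Psi> (\<lambda>n. h n - a n) < ereal (\<delta>\<^sup>2)"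
    by blast
  have ev1: "eventually (\<lambda>N. favg \<Psi> (\<lambda>n. (cmod (h n - a n))\<^sup>2) N < \<delta>\<^sup>2) sequentially"
    by (rule sqnorm_lessD[OF a(2)])
  have ev2: "eventually (\<lambda>N. cmod (favg \<Psi> (\<lambda>n. fA n * cnj (a n)) N) < r / 2) sequentially"
  proof -
    have "(\<lambda>N. cmod (favg \<Psi> (\<lambda>n. fA n * cnj (a n)) N)) \<longlonglongrightarrow> 0"
      by (rule tendsto_norm_zero[OF perp_trig[OF A a(1)]])
    moreover have "0 < r / 2" using r by simp
    ultimately show ?thesis by (rule order_tendstoD(2))
  qed
  have "eventually (\<lambda>N. norm (favg \<Psi> (\<lambda>n. fA n * cnj (h n)) N - 0) < r) sequentially"
    using R ev1 ev2
  proof eventually_elim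
    case (elim N)
    have split: "favg \<Psi> (\<lambda>n. fA n * cnj (h n)) N = favg \<Psi> (\<lambda>n. fA n * cnj (h n - a n)) N + favg \<Psi> (\<lambda>n. fA n * cnj (a n)) N"
    proof -
      have "(\<lambda>n. fA n * cnj (h n)) = (\<lambda>n. fA n * cnj (h n - a n) + fA n * cnj (a n))"
        by (simp add: algebra_simps)
      then show ?thesis by (simp add: favg_add)
    qed
    have "cmod (favg \<Psi> (\<lambda>n. fA n * cnj (h n - a n)) N) \<le>
        (s * favg \<Psi> (\<lambda>n. (cmod (fA n))\<^sup>2) N + favg \<Psi> (\<lambda>n. (cmod (h n - a n))\<^sup>2) N / s) / 2"
      by (rule cs_avg[OF sp])
    also have "\<dots> < (s * R' + (r * s / 2) / s) / 2"
    proof -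
      have i1: "s * favg \<Psi> (\<lambda>n. (cmod (fA n))\<^sup>2) N \<le> s * R'"
        using elim(1) sp unfolding R'_def by (intro mult_left_mono) auto
      have i2: "favg \<Psi> (\<lambda>n. (cmod (h n - a n))\<^sup>2) N / s < (r * s / 2) / s"
        using elim(2) d2 sp by (intro divide_strict_right_mono) simp_all
      have i3: "s * favg \<Psi> (\<lambda>n. (cmod (fA n))\<^sup>2) N + favg \<Psi> (\<lambda>n. (cmod (h n - a n))\<^sup>2) N / s
          < s * R' + (r * s / 2) / s" by (rule add_le_less_mono[OF i1 i2])
      show ?thesis by (rule divide_strict_right_mono[OF i3]) simp
    qed
    also have "(s * R' + (r * s / 2) / s) / 2 = r / 2"
      using sp R'p unfolding s_def by (simp add: field_simps)
    finally have hX: "cmod (favg \<Psi> (\<lambda>n. fA n * cnj (h n - a n)) N) < r / 2" .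
    have tot: "cmod (favg \<Psi> (\<lambda>n. fA n * cnj (h n - a n)) N) + cmod (favg \<Psi> (\<lambda>n. fA n * cnj (a n)) N) < r"
      using hX elim(3) by linarith
    have "cmod (favg \<Psi> (\<lambda>n. fA n * cnj (h n - a n)) N + favg \<Psi> (\<lambda>n. fA n * cnj (a n)) N) < r"
      by (rule norm_triangle_lt[OF tot])
    then show ?case unfolding split by simp
  qed
  then show "\<exists>no. \<forall>n\<ge>no. norm (favg \<Psi> (\<lambda>n. fA n * cnj (h n)) n - 0) < r"
    unfolding eventually_sequentially .
qed

lemma sq_add_expand: "(cmod (x + y))\<^sup>2 = (cmod x)\<^sup>2 + (cmod y)\<^sup>2 + 2 * Re (x * cnj y)"
  unfolding cmod_power2 by (simp add: power2_eq_square algebra_simps)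

lemma sqnorm_min:
  assumes fne: "fne \<Psi>" and fB: "fB \<in> Bes \<Psi>" and fA: "(\<lambda>n. f n - fB n) \<in> Bes_perp \<Psi>"
    and g: "g \<in> Bes \<Psi>"
  shows "sqnorm \<Psi> (\<lambda>n. f n - fB n) \<le> sqnorm \<Psi> (\<lambda>n. f n - g n)"
proof (rule ereal_le_epsilon2)
  fix \<epsilon> :: real assume e: "0 < \<epsilon>"
  let ?a = "\<lambda>n. f n - fB n" and ?d = "\<lambda>n. fB n - g n"
  let ?e = "\<lambda>N. favg \<Psi> (\<lambda>n. ?a n * cnj (?d n)) N"
  have le: "favg \<Psi> (\<lambda>n. (cmod (?a n))\<^sup>2) N \<le> favg \<Psi> (\<lambda>n. (cmod (f n - g n))\<^sup>2) N - 2 * Re (?e N)" for N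
  proof -
    have "favg \<Psi> (\<lambda>n. (cmod (?a n))\<^sup>2) N \<le> favg \<Psi> (\<lambda>n. (cmod (f n - g n))\<^sup>2 - 2 * Re (?a n * cnj (?d n))) N"
    proof (rule favg_mono)
      fix n
      have "f n - g n = ?a n + ?d n" by simp
      then have "(cmod (f n - g n))\<^sup>2 = (cmod (?a n))\<^sup>2 + (cmod (?d n))\<^sup>2 + 2 * Re (?a n * cnj (?d n))"
        by (simp only: sq_add_expand)
      then show "(cmod (?a n))\<^sup>2 \<le> (cmod (f n - g n))\<^sup>2 - 2 * Re (?a n * cnj (?d n))" by simp
    qed
    also have "\<dots> = favg \<Psi> (\<lambda>n. (cmod (f n - g n))\<^sup>2) N - 2 * Re (?e N)"
      by (simp add: favg_diff favg_cmult favg_Re)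
    finally show ?thesis .
  qed
  have elim0: "?e \<longlonglongrightarrow> 0"
  proof -
    have "(\<lambda>N. favg \<Psi> (\<lambda>n. ?a n * cnj (fB n)) N - favg \<Psi> (\<lambda>n. ?a n * cnj (g n)) N) \<longlonglongrightarrow> 0 - 0"
      by (intro tendsto_diff perp_cross[OF fne fA fB] perp_cross[OF fne fA g])
    moreover have "favg \<Psi> (\<lambda>n. ?a n * cnj (fB n)) N - favg \<Psi> (\<lambda>n. ?a n * cnj (g n)) N = ?e N" for N
    proof -
      have "(\<lambda>n. ?a n * cnj (?d n)) = (\<lambda>n. ?a n * cnj (fB n) - ?a n * cnj (g n))"
        by (simp add: algebra_simps)
      then show ?thesis by (simp add: favg_diff)
    qed
    ultimately show ?thesis by simp
  qed
  show "sqnorm \<Psi> (\<lambda>n. f n - fB n) \<le> sqnorm \<Psi> (\<lambda>n. f n - g n) + ereal \<epsilon>"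
  proof (cases "sqnorm \<Psi> (\<lambda>n. f n - g n)")
    case (real s)
    have "sqnorm \<Psi> (\<lambda>n. f n - g n) < ereal (s + \<epsilon>/2)" using real e by simp
    from sqnorm_lessD[OF this]
    have ev1: "eventually (\<lambda>N. favg \<Psi> (\<lambda>n. (cmod (f n - g n))\<^sup>2) N < s + \<epsilon>/2) sequentially" .
    have "(\<lambda>N. cmod (?e N)) \<longlonglongrightarrow> 0" by (rule tendsto_norm_zero[OF elim0])
    moreover have "0 < \<epsilon>/4" using e by simp
    ultimately have ev2: "eventually (\<lambda>N. cmod (?e N) < \<epsilon>/4) sequentially" by (rule order_tendstoD(2))
    have "eventually (\<lambda>N. favg \<Psi> (\<lambda>n. (cmod (?a n))\<^sup>2) N \<le> s + \<epsilon>) sequentially"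
      using ev1 ev2
    proof eventually_elim
      case (elim N)
      have "- Re (?e N) \<le> cmod (?e N)" using abs_Re_le_cmod[of "?e N"] by linarith
      then show ?case using le[of N] elim by linarith
    qed
    then have "sqnorm \<Psi> (\<lambda>n. f n - fB n) \<le> ereal (s + \<epsilon>)" by (rule sqnorm_le)
    then show ?thesis using real by simp
  qed (use sqnorm_nonneg[of \<Psi> "\<lambda>n. f n - g n"] in simp_all)
qed

lemma Inf_char:
  assumes fne: "fne \<Psi>" and fB: "fB \<in> Bes \<Psi>" and fA: "(\<lambda>n. f n - fB n) \<in> Bes_perp \<Psi>"
  shows "snorm \<Psi> (\<lambda>n. f n - fB n) = Inf {snorm \<Psi> (\<lambda>n. f n - g n) | g. g \<in> Bes \<Psi>}"
proof (rule cInf_eq_minimum[symmetric])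
  show "snorm \<Psi> (\<lambda>n. f n - fB n) \<in> {snorm \<Psi> (\<lambda>n. f n - g n) | g. g \<in> Bes \<Psi>}"
    using fB by blast
  fix x assume "x \<in> {snorm \<Psi> (\<lambda>n. f n - g n) | g. g \<in> Bes \<Psi>}"
  then obtain g where g: "g \<in> Bes \<Psi>" and x: "x = snorm \<Psi> (\<lambda>n. f n - g n)" by blast
  have L2a: "(\<lambda>n. f n - fB n) \<in> L2 \<Psi>" using fA unfolding Bes_perp_iff by blast
  have "(\<lambda>n. g n - fB n) \<in> L2 \<Psi>" by (rule L2_diff[OF Bes_L2[OF g] Bes_L2[OF fB]])
  then have "(\<lambda>n. (f n - fB n) - (g n - fB n)) \<in> L2 \<Psi>" by (rule L2_diff[OF L2a])
  then have L2g: "(\<lambda>n. f n - g n) \<in> L2 \<Psi>" by simp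
  have "real_of_ereal (sqnorm \<Psi> (\<lambda>n. f n - fB n)) \<le> real_of_ereal (sqnorm \<Psi> (\<lambda>n. f n - g n))"
    by (rule real_of_ereal_positive_mono[OF sqnorm_nonneg sqnorm_min[OF fne fB fA g]])
       (use L2g in \<open>simp add: L2_def\<close>)
  then show "snorm \<Psi> (\<lambda>n. f n - fB n) \<le> x" unfolding x snorm_def by simp
qed

lemma rpf_trig:
  fixes p :: "complex \<Rightarrow> real"
  assumes "real_polynomial_function p" and a: "trig_poly a"
  shows "trig_poly (\<lambda>n. complex_of_real (p (a n)))"
  using assms(1)
proof (induction p)
  case (linear p)
  have eq: "p z = Re z * p 1 + Im z * p \<i>" for z
  proof -
    have zz: "Re z *\<^sub>R 1 + Im z *\<^sub>R \<i> = z" by (simp add: complex_eq_iff)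
    have "p (Re z *\<^sub>R 1 + Im z *\<^sub>R \<i>) = Re z *\<^sub>R p 1 + Im z *\<^sub>R p \<i>"
      using linear_add[OF bounded_linear.linear[OF linear]] linear_scale[OF bounded_linear.linear[OF linear]] by simp
    then show ?thesis unfolding zz by simp
  qed
  have "complex_of_real (p (a n)) = of_real (p 1) * of_real (Re (a n)) + of_real (p \<i>) * of_real (Im (a n))" for n
  proof -
    have "p (a n) = Re (a n) * p 1 + Im (a n) * p \<i>" by (rule eq)
    then show ?thesis by (simp only: of_real_add of_real_mult mult.commute)
  qed
  then have "(\<lambda>n. complex_of_real (p (a n))) = (\<lambda>n. of_real (p 1) * of_real (Re (a n)) + of_real (p \<i>) * of_real (Im (a n)))"
    by (rule ext)
  moreover have "trig_poly (\<lambda>n. of_real (p 1) * of_real (Re (a n)) + of_real (p \<i>) * complex_of_real (Im (a n)))"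
    by (intro trig_poly_add trig_poly_cmult trig_poly_Re trig_poly_Im a)
  ultimately show ?case by simp
next
  case (const c)
  then show ?case by (rule trig_poly_const)
next
  case (add f g)
  then show ?case using trig_poly_add[OF add.IH] by simp
next
  case (mult f g)
  then show ?case using trig_poly_mult[OF mult.IH] by simp
qed

lemma poly_trig:
  fixes g :: "complex \<Rightarrow> complex"
  assumes g: "polynomial_function g" and a: "trig_poly a"
  shows "trig_poly (\<lambda>n. g (a n))"
proof -
  have r: "real_polynomial_function (Re \<circ> g)" and i: "real_polynomial_function (Im \<circ> g)"
    using g bounded_linear_Re bounded_linear_Im unfolding polynomial_function_def by blast+
  have "trig_poly (\<lambda>n. complex_of_real ((Re \<circ> g) (a n)) + \<i> * complex_of_real ((Im \<circ> g) (a n)))"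
    by (intro trig_poly_add trig_poly_cmult rpf_trig r i a)
  moreover have "(\<lambda>n. complex_of_real ((Re \<circ> g) (a n)) + \<i> * complex_of_real ((Im \<circ> g) (a n))) = (\<lambda>n. g (a n))"
    by (rule ext) (simp add: complex_eq_iff)
  ultimately show ?thesis by simp
qed

lemma Bes_lip:
  fixes \<phi> :: "complex \<Rightarrow> complex"
  assumes h: "h \<in> Bes \<Psi>" and lip: "\<And>z w. cmod (\<phi> z - \<phi> w) \<le> L * cmod (z - w)" and L: "L \<ge> 0"
    and cont: "continuous_on UNIV \<phi>"
  shows "(\<lambda>n. \<phi> (h n)) \<in> Bes \<Psi>"
  unfolding Bes_def
proof (intro CollectI allI impI)
  fix \<epsilon> :: real assume e: "\<epsilon> > 0"
  define K where "K = L + 2"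
  have K1: "K > 1" and lipK: "cmod (\<phi> z - \<phi> w) \<le> K * cmod (z - w)" for z w
  proof -
    show "K > 1" using L unfolding K_def by simp
    have "L * cmod (z - w) \<le> K * cmod (z - w)" unfolding K_def by (intro mult_right_mono) simp_all
    then show "cmod (\<phi> z - \<phi> w) \<le> K * cmod (z - w)" using lip[of z w] by linarith
  qed
  define \<eta> where "\<eta> = \<epsilon> / (2 * K)"
  have eta: "\<eta> > 0" unfolding \<eta>_def using e K1 by simp
  have "\<forall>\<epsilon>>0. \<exists>a. trig_poly a \<and> sqnorm \<Psi> (\<lambda>n. h n - a n) < ereal (\<epsilon>\<^sup>2)"
    using h unfolding Bes_def by simp
  from this[rule_format, OF eta] obtain a where a: "trig_poly a" "sqnorm \<Psi> (\<lambda>n. h n - a n) < ereal (\<eta>\<^sup>2)"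
    by blast
  obtain M where M: "\<And>n. cmod (a n) \<le> M" using trig_poly_bounded[OF a(1)] by blast
  have cc: "continuous_on (cball 0 M) \<phi>" using cont by (rule continuous_on_subset) simp
  obtain g where g: "polynomial_function g" and gapp0: "\<forall>z \<in> cball 0 M. cmod (\<phi> z - g z) < \<eta>"
    using Stone_Weierstrass_polynomial_function[OF compact_cball cc eta] by blast
  have gapp: "cmod (\<phi> z - g z) < \<eta>" if "z \<in> cball 0 M" for z using gapp0 that by blast
  have tb: "trig_poly (\<lambda>n. g (a n))" by (rule poly_trig[OF g a(1)])
  have pw: "(cmod (\<phi> (h n) - g (a n)))\<^sup>2 \<le> 2 * K\<^sup>2 * (cmod (h n - a n))\<^sup>2 + 2 * \<eta>\<^sup>2" for n
  proof -
    have "cmod (\<phi> (h n) - g (a n)) \<le> cmod (\<phi> (h n) - \<phi> (a n)) + cmod (\<phi> (a n) - g (a n))"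
      using norm_triangle_ineq[of "\<phi> (h n) - \<phi> (a n)" "\<phi> (a n) - g (a n)"] by simp
    also have "\<dots> \<le> K * cmod (h n - a n) + \<eta>"
      using lipK[of "h n" "a n"] gapp[of "a n"] M[of n] by (simp add: less_imp_le)
    finally have "(cmod (\<phi> (h n) - g (a n)))\<^sup>2 \<le> (K * cmod (h n - a n) + \<eta>)\<^sup>2"
      by (intro power_mono) simp_all
    also have "\<dots> \<le> 2 * K\<^sup>2 * (cmod (h n - a n))\<^sup>2 + 2 * \<eta>\<^sup>2"
      using sum_squares_bound[of "K * cmod (h n - a n)" \<eta>]
      by (simp add: power2_eq_square algebra_simps)
    finally show ?thesis .
  qed
  have ev: "eventually (\<lambda>N. favg \<Psi> (\<lambda>n. (cmod (h n - a n))\<^sup>2) N < \<eta>\<^sup>2) sequentially"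
    by (rule sqnorm_lessD[OF a(2)])
  have "eventually (\<lambda>N. favg \<Psi> (\<lambda>n. (cmod (\<phi> (h n) - g (a n)))\<^sup>2) N \<le> 2 * K\<^sup>2 * \<eta>\<^sup>2 + 2 * \<eta>\<^sup>2) sequentially"
    using ev
  proof (rule eventually_mono)
    fix N assume hN: "favg \<Psi> (\<lambda>n. (cmod (h n - a n))\<^sup>2) N < \<eta>\<^sup>2"
    have "favg \<Psi> (\<lambda>n. (cmod (\<phi> (h n) - g (a n)))\<^sup>2) N \<le> favg \<Psi> (\<lambda>n. 2 * K\<^sup>2 * (cmod (h n - a n))\<^sup>2 + 2 * \<eta>\<^sup>2) N"
      by (rule favg_mono) (rule pw)
    also have "\<dots> = 2 * K\<^sup>2 * favg \<Psi> (\<lambda>n. (cmod (h n - a n))\<^sup>2) N + favg \<Psi> (\<lambda>n. 2 * \<eta>\<^sup>2) N"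
      by (simp only: favg_add favg_cmult)
    also have "favg \<Psi> (\<lambda>n. 2 * \<eta>\<^sup>2) N \<le> 2 * \<eta>\<^sup>2"
      unfolding favg_def by (simp add: divide_le_eq)
    also have "2 * K\<^sup>2 * favg \<Psi> (\<lambda>n. (cmod (h n - a n))\<^sup>2) N \<le> 2 * K\<^sup>2 * \<eta>\<^sup>2"
      using hN by (intro mult_left_mono) simp_all
    finally show "favg \<Psi> (\<lambda>n. (cmod (\<phi> (h n) - g (a n)))\<^sup>2) N \<le> 2 * K\<^sup>2 * \<eta>\<^sup>2 + 2 * \<eta>\<^sup>2" by simp
  qed
  then have s: "sqnorm \<Psi> (\<lambda>n. \<phi> (h n) - g (a n)) \<le> ereal (2 * K\<^sup>2 * \<eta>\<^sup>2 + 2 * \<eta>\<^sup>2)"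
    by (rule sqnorm_le)
  have "2 * K\<^sup>2 * \<eta>\<^sup>2 + 2 * \<eta>\<^sup>2 < \<epsilon>\<^sup>2"
  proof -
    have a1: "2 * K\<^sup>2 * \<eta>\<^sup>2 = \<epsilon>\<^sup>2 / 2" unfolding \<eta>_def using K1 by (simp add: power2_eq_square field_simps)
    have "\<eta> < \<epsilon> / 2" unfolding \<eta>_def using K1 e by (simp add: field_simps)
    then have "\<eta>\<^sup>2 < (\<epsilon> / 2)\<^sup>2" using eta by (intro power_strict_mono) simp_all
    then have "2 * \<eta>\<^sup>2 < \<epsilon>\<^sup>2 / 2" by (simp add: power2_eq_square)
    then show ?thesis using a1 by simp
  qed
  then have "sqnorm \<Psi> (\<lambda>n. \<phi> (h n) - g (a n)) < ereal (\<epsilon>\<^sup>2)" using s by (simp add: le_less_trans)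
  then show "\<exists>b. trig_poly b \<and> sqnorm \<Psi> (\<lambda>n. \<phi> (h n) - b n) < ereal (\<epsilon>\<^sup>2)"
    using tb by blast
qed

lemma favg_neg: "favg \<Psi> (\<lambda>n. - g n) N = - favg \<Psi> g N"
  unfolding favg_def by (simp add: sum_negf)

definition clip :: "real \<Rightarrow> real \<Rightarrow> complex \<Rightarrow> complex" where
  "clip \<alpha> \<beta> z = complex_of_real (max \<alpha> (min \<beta> (Re z)))"

lemma clamp_lip: "\<bar>max \<alpha> (min \<beta> x) - max \<alpha> (min \<beta> y)\<bar> \<le> \<bar>x - y\<bar>" for x y :: real
  by (auto simp: max_def min_def abs_if)

lemma clip_lip: "cmod (clip \<alpha> \<beta> z - clip \<alpha> \<beta> w) \<le> cmod (z - w)"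
proof -
  have "cmod (clip \<alpha> \<beta> z - clip \<alpha> \<beta> w) = \<bar>max \<alpha> (min \<beta> (Re z)) - max \<alpha> (min \<beta> (Re w))\<bar>"
    unfolding clip_def by (simp flip: of_real_diff)
  also have "\<dots> \<le> \<bar>Re z - Re w\<bar>" by (rule clamp_lip)
  also have "\<dots> \<le> cmod (z - w)" using abs_Re_le_cmod[of "z - w"] by simp
  finally show ?thesis .
qed

lemma dclip_lip: "cmod ((z - clip \<alpha> \<beta> z) - (w - clip \<alpha> \<beta> w)) \<le> 2 * cmod (z - w)"
proof -
  have "(z - clip \<alpha> \<beta> z) - (w - clip \<alpha> \<beta> w) = (z - w) - (clip \<alpha> \<beta> z - clip \<alpha> \<beta> w)" by simp
  then have "cmod ((z - clip \<alpha> \<beta> z) - (w - clip \<alpha> \<beta> w)) \<le> cmod (z - w) + cmod (clip \<alpha> \<beta> z - clip \<alpha> \<beta> w)"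
    using norm_triangle_ineq4 by metis
  then show ?thesis using clip_lip[of \<alpha> \<beta> z w] by simp
qed

lemma dclip_cont: "continuous_on UNIV (\<lambda>z. z - clip \<alpha> \<beta> z)"
  unfolding clip_def by (intro continuous_intros)

lemma clamp_key:
  fixes x r :: real
  assumes "\<alpha> \<le> x" "x \<le> \<beta>"
  shows "(r - max \<alpha> (min \<beta> r)) * (x - max \<alpha> (min \<beta> r)) \<le> 0"
proof (cases "r < \<alpha>")
  case True
  then have "max \<alpha> (min \<beta> r) = \<alpha>" using assms by simp
  then show ?thesis using True assms by (simp add: mult_nonpos_nonneg)
next
  case False
  show ?thesis
  proof (cases "r > \<beta>")
    case True
    then have "max \<alpha> (min \<beta> r) = \<beta>" using assms by simp
    then show ?thesis using True assms by (simp add: mult_nonneg_nonpos)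
  next
    case False2: False
    then have "max \<alpha> (min \<beta> r) = r" using False by simp
    then show ?thesis by simp
  qed
qed

lemma clip_key:
  assumes "\<alpha> \<le> x" "x \<le> \<beta>"
  shows "(cmod (z - clip \<alpha> \<beta> z))\<^sup>2 \<le> - Re ((complex_of_real x - z) * cnj (z - clip \<alpha> \<beta> z))"
proof -
  define y where "y = max \<alpha> (min \<beta> (Re z))"
  have k: "(Re z - y) * (x - y) \<le> 0" unfolding y_def by (rule clamp_key[OF assms])
  have "(cmod (z - clip \<alpha> \<beta> z))\<^sup>2 = (Re z - y)\<^sup>2 + (Im z)\<^sup>2"
    unfolding clip_def y_def[symmetric] by (simp add: cmod_power2)
  moreover have "- Re ((complex_of_real x - z) * cnj (z - clip \<alpha> \<beta> z)) = (Re z - x) * (Re z - y) + (Im z)\<^sup>2"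
    unfolding clip_def y_def[symmetric] by (simp add: power2_eq_square algebra_simps)
  moreover have "(Re z - y)\<^sup>2 \<le> (Re z - x) * (Re z - y)"
  proof -
    have "(Re z - x) * (Re z - y) - (Re z - y)\<^sup>2 = - ((Re z - y) * (x - y))"
      by (simp add: power2_eq_square algebra_simps)
    then show ?thesis using k by linarith
  qed
  ultimately show ?thesis by linarith
qed

lemma null_coef:
  assumes fne: "fne \<Psi>" and d: "sqnorm \<Psi> d = 0"
  shows "coef \<Psi> d \<theta> \<longlonglongrightarrow> 0"
proof (rule LIMSEQ_I)
  fix r :: real assume r: "0 < r"
  have "(\<lambda>N. favg \<Psi> (\<lambda>n. (cmod (d n))\<^sup>2) N) \<longlonglongrightarrow> 0" by (rule sqnorm_zero_tendsto[OF d])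
  moreover have "0 < r\<^sup>2 / 4" using r by simp
  ultimately have "eventually (\<lambda>N. favg \<Psi> (\<lambda>n. (cmod (d n))\<^sup>2) N < r\<^sup>2 / 4) sequentially"
    by (rule order_tendstoD(2))
  then have "eventually (\<lambda>N. norm (coef \<Psi> d \<theta> N - 0) < r) sequentially"
  proof (rule eventually_mono)
    fix N assume h: "favg \<Psi> (\<lambda>n. (cmod (d n))\<^sup>2) N < r\<^sup>2 / 4"
    have "cmod (coef \<Psi> d \<theta> N) < r / 2" by (rule coef_small[OF fne r h])
    then show "norm (coef \<Psi> d \<theta> N - 0) < r" using r by simp
  qed
  then show "\<exists>no. \<forall>n\<ge>no. norm (coef \<Psi> d \<theta> n - 0) < r" unfolding eventually_sequentially .
qed

lemma L2_null: "sqnorm \<Psi> d = 0 \<Longrightarrow> d \<in> L2 \<Psi>"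
  unfolding L2_def by simp

lemma L2_neg: "d \<in> L2 \<Psi> \<Longrightarrow> (\<lambda>n. - d n) \<in> L2 \<Psi>"
  unfolding L2_def sqnorm_def by simp

lemma perp_null_perturb:
  assumes fne: "fne \<Psi>" and A: "fA \<in> Bes_perp \<Psi>" and d: "sqnorm \<Psi> d = 0"
  shows "(\<lambda>n. fA n + d n) \<in> Bes_perp \<Psi>"
  unfolding Bes_perp_iff
proof (intro conjI allI impI)
  have "fA \<in> L2 \<Psi>" using A unfolding Bes_perp_iff by blast
  from L2_diff[OF this L2_neg[OF L2_null[OF d]]] show "(\<lambda>n. fA n + d n) \<in> L2 \<Psi>" by simp
  fix \<theta> :: real assume th: "0 \<le> \<theta> \<and> \<theta> < 1"
  have "coef \<Psi> fA \<theta> \<longlonglongrightarrow> 0" using A th unfolding Bes_perp_iff by blast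
  then have "(\<lambda>N. coef \<Psi> fA \<theta> N + coef \<Psi> d \<theta> N) \<longlonglongrightarrow> 0 + 0"
    by (intro tendsto_add null_coef[OF fne d])
  moreover have "coef \<Psi> (\<lambda>n. fA n + d n) \<theta> = (\<lambda>N. coef \<Psi> fA \<theta> N + coef \<Psi> d \<theta> N)"
    by (rule ext) (simp add: coef_def favg_add distrib_right)
  ultimately show "coef \<Psi> (\<lambda>n. fA n + d n) \<theta> \<longlonglongrightarrow> 0" by simp
qed

lemma Bes_null_perturb:
  assumes h: "h \<in> Bes \<Psi>" and d: "sqnorm \<Psi> d = 0"
  shows "(\<lambda>n. h n - d n) \<in> Bes \<Psi>"
  unfolding Bes_def
proof (intro CollectI allI impI)
  fix \<epsilon> :: real assume e: "\<epsilon> > 0"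
  have e3: "\<epsilon> / 3 > 0" using e by simp
  have "\<forall>\<epsilon>>0. \<exists>a. trig_poly a \<and> sqnorm \<Psi> (\<lambda>n. h n - a n) < ereal (\<epsilon>\<^sup>2)"
    using h unfolding Bes_def by simp
  from this[rule_format, OF e3] obtain a where a: "trig_poly a" "sqnorm \<Psi> (\<lambda>n. h n - a n) < ereal ((\<epsilon>/3)\<^sup>2)"
    by blast
  have ev1: "eventually (\<lambda>N. favg \<Psi> (\<lambda>n. (cmod (h n - a n))\<^sup>2) N < (\<epsilon>/3)\<^sup>2) sequentially"
    by (rule sqnorm_lessD[OF a(2)])
  have "(\<lambda>N. favg \<Psi> (\<lambda>n. (cmod (d n))\<^sup>2) N) \<longlonglongrightarrow> 0" by (rule sqnorm_zero_tendsto[OF d])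
  moreover have "0 < (\<epsilon>/3)\<^sup>2" using e by simp
  ultimately have ev2: "eventually (\<lambda>N. favg \<Psi> (\<lambda>n. (cmod (d n))\<^sup>2) N < (\<epsilon>/3)\<^sup>2) sequentially"
    by (rule order_tendstoD(2))
  have "eventually (\<lambda>N. favg \<Psi> (\<lambda>n. (cmod ((h n - d n) - a n))\<^sup>2) N \<le> 4 * (\<epsilon>/3)\<^sup>2) sequentially"
    using ev1 ev2
  proof eventually_elim
    case (elim N)
    have "favg \<Psi> (\<lambda>n. (cmod ((h n - a n) - d n))\<^sup>2) N \<le> 2 * favg \<Psi> (\<lambda>n. (cmod (h n - a n))\<^sup>2) N + 2 * favg \<Psi> (\<lambda>n. (cmod (d n))\<^sup>2) N"
      by (rule favg_sq_diff_le)
    moreover have "(\<lambda>n. (cmod ((h n - a n) - d n))\<^sup>2) = (\<lambda>n. (cmod ((h n - d n) - a n))\<^sup>2)"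
      by (simp add: algebra_simps)
    ultimately show ?case using elim by simp
  qed
  then have "sqnorm \<Psi> (\<lambda>n. (h n - d n) - a n) \<le> ereal (4 * (\<epsilon>/3)\<^sup>2)" by (rule sqnorm_le)
  moreover have "4 * (\<epsilon>/3)\<^sup>2 < \<epsilon>\<^sup>2" using e by (simp add: power2_eq_square)
  ultimately have "sqnorm \<Psi> (\<lambda>n. (h n - d n) - a n) < ereal (\<epsilon>\<^sup>2)" by (simp add: le_less_trans)
  then show "\<exists>a. trig_poly a \<and> sqnorm \<Psi> (\<lambda>n. h n - d n - a n) < ereal (\<epsilon>\<^sup>2)" using a(1) by blast
qed

lemma clip_null:
  assumes fne: "fne \<Psi>" and fB: "fB \<in> Bes \<Psi>" and fA: "(\<lambda>n. f n - fB n) \<in> Bes_perp \<Psi>"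
    and fr: "\<And>n. f n = complex_of_real (Re (f n))" and rng: "\<And>n. \<alpha> \<le> Re (f n) \<and> Re (f n) \<le> \<beta>"
  shows "sqnorm \<Psi> (\<lambda>n. fB n - clip \<alpha> \<beta> (fB n)) = 0"
proof -
  let ?d = "\<lambda>n. fB n - clip \<alpha> \<beta> (fB n)"
  have dB: "?d \<in> Bes \<Psi>"
    by (rule Bes_lip[OF fB dclip_lip _ dclip_cont]) simp
  have lim: "(\<lambda>N. favg \<Psi> (\<lambda>n. (f n - fB n) * cnj (?d n)) N) \<longlonglongrightarrow> 0"
    by (rule perp_cross[OF fne fA dB])
  have le: "favg \<Psi> (\<lambda>n. (cmod (?d n))\<^sup>2) N \<le> cmod (favg \<Psi> (\<lambda>n. (f n - fB n) * cnj (?d n)) N)" for N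
  proof -
    have "favg \<Psi> (\<lambda>n. (cmod (?d n))\<^sup>2) N \<le> favg \<Psi> (\<lambda>n. - Re ((f n - fB n) * cnj (?d n))) N"
    proof (rule favg_mono)
      fix n
      have "f n - fB n = complex_of_real (Re (f n)) - fB n" using fr[of n] by simp
      then show "(cmod (?d n))\<^sup>2 \<le> - Re ((f n - fB n) * cnj (?d n))"
        using clip_key[of \<alpha> "Re (f n)" \<beta> "fB n"] rng[of n] by simp
    qed
    also have "\<dots> = - Re (favg \<Psi> (\<lambda>n. (f n - fB n) * cnj (?d n)) N)"
      by (simp only: favg_neg favg_Re)
    also have "\<dots> \<le> cmod (favg \<Psi> (\<lambda>n. (f n - fB n) * cnj (?d n)) N)"
      using abs_Re_le_cmod[of "favg \<Psi> (\<lambda>n. (f n - fB n) * cnj (?d n)) N"] by linarith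
    finally show ?thesis .
  qed
  have "(\<lambda>N. favg \<Psi> (\<lambda>n. (cmod (?d n))\<^sup>2) N) \<longlonglongrightarrow> 0"
  proof (rule tendsto_sandwich[OF _ _ tendsto_const tendsto_norm_zero[OF lim]])
    show "eventually (\<lambda>N. 0 \<le> favg \<Psi> (\<lambda>n. (cmod (?d n))\<^sup>2) N) sequentially"
      by (intro always_eventually allI sq_nonneg_favg)
    show "eventually (\<lambda>N. favg \<Psi> (\<lambda>n. (cmod (?d n))\<^sup>2) N \<le> cmod (favg \<Psi> (\<lambda>n. (f n - fB n) * cnj (?d n)) N)) sequentially"
      by (intro always_eventually allI le)
  qed
  then show ?thesis by (rule tendsto_sqnorm_zero)
qed

lemma decomp_main:
  assumes F: "foelner \<Phi>" and fL2: "f \<in> L2 \<Phi>"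
  shows "\<exists>\<sigma>. strict_mono \<sigma> \<and> (\<exists>fB. fB \<in> Bes (\<Phi> \<circ> \<sigma>) \<and> (\<lambda>n. f n - fB n) \<in> Bes_perp (\<Phi> \<circ> \<sigma>))"
proof -
  have fne: "fne \<Phi>" using F by (rule foelner_fne)
  obtain B where B: "\<And>N. favg \<Phi> (\<lambda>n. (cmod (f n))\<^sup>2) N \<le> B" using L2_bound[OF fL2] by blast
  obtain \<sigma> :: "nat \<Rightarrow> nat" and t :: "nat \<Rightarrow> real" and c :: "nat \<Rightarrow> complex" where
    sm: "strict_mono \<sigma>" and inj: "inj t" and rng: "\<And>k. 0 \<le> t k \<and> t k < 1" and
    lim: "\<And>k. coef (\<Phi> \<circ> \<sigma>) f (t k) \<longlonglongrightarrow> c k" and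
    zero: "\<And>\<theta>. 0 \<le> \<theta> \<and> \<theta> < 1 \<and> \<theta> \<notin> range t \<Longrightarrow> coef (\<Phi> \<circ> \<sigma>) f \<theta> \<longlonglongrightarrow> 0"
    using extraction[OF F B] by blast
  let ?\<Psi> = "\<Phi> \<circ> \<sigma>"
  have F': "foelner ?\<Psi>" using F sm by (rule foelner_comp)
  have B': "favg ?\<Psi> (\<lambda>n. (cmod (f n))\<^sup>2) N \<le> B" for N by (simp add: favg_comp B)
  have bes: "(\<Sum>k\<in>{..<K}. (cmod (c k))\<^sup>2) \<le> B" for K
    by (rule bessel[OF F' _ _ _ _ B']) (use inj rng lim[unfolded coef_def] in \<open>auto simp: inj_on_def\<close>)
  have summ: "summable (\<lambda>k. (cmod (c k))\<^sup>2)"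
    by (rule summableI_nonneg_bounded[of _ B]) (use bes in simp_all)
  have g: "gh ?\<Psi> c t" unfolding gh_def using F' inj rng summ by blast
  have fBB: "fBg ?\<Psi> c t \<in> Bes (?\<Psi> \<circ> tau ?\<Psi> c t)" by (rule fBg_Bes[OF g])
  have fAP: "(\<lambda>n. f n - fBg ?\<Psi> c t n) \<in> Bes_perp (?\<Psi> \<circ> tau ?\<Psi> c t)"
    by (rule fA_perp[OF g lim _ B']) (use zero in blast)
  have sm2: "strict_mono (\<sigma> \<circ> tau ?\<Psi> c t)" using sm tau_mono[OF g] by (rule strict_mono_o)
  have eq: "?\<Psi> \<circ> tau ?\<Psi> c t = \<Phi> \<circ> (\<sigma> \<circ> tau ?\<Psi> c t)" by (simp add: o_assoc)
  show ?thesis using sm2 fBB fAP unfolding eq by blast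
qed

theorem theorem3p6:
  fixes \<Phi> :: "nat \<Rightarrow> nat set" and f :: "nat \<Rightarrow> complex"
  assumes "foelner \<Phi>" and "f \<in> L2 \<Phi>"
  shows "\<exists>\<sigma>::nat \<Rightarrow> nat. strict_mono \<sigma> \<and>
    (\<exists>fB fA. fB \<in> Bes (\<Phi> \<circ> \<sigma>) \<and> fA \<in> Bes_perp (\<Phi> \<circ> \<sigma>) \<and> f = (\<lambda>n. fB n + fA n) \<and>
      snorm (\<Phi> \<circ> \<sigma>) (\<lambda>n. f n - fB n) =
        Inf {snorm (\<Phi> \<circ> \<sigma>) (\<lambda>n. f n - g n) | g. g \<in> Bes (\<Phi> \<circ> \<sigma>)} \<and>
      (\<forall>a b::real. (\<forall>n. f n \<in> complex_of_real ` {a..b}) \<longrightarrow>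
                   (\<forall>n. fB n \<in> complex_of_real ` {a..b})))"
proof -
  obtain \<sigma> fB0 where sm: "strict_mono \<sigma>" and B0: "fB0 \<in> Bes (\<Phi> \<circ> \<sigma>)"
    and A0: "(\<lambda>n. f n - fB0 n) \<in> Bes_perp (\<Phi> \<circ> \<sigma>)"
    using decomp_main[OF assms] by blast
  let ?\<Psi> = "\<Phi> \<circ> \<sigma>"
  have fne: "fne ?\<Psi>" using assms(1) by (intro fne_comp foelner_fne)
  define R where "R \<longleftrightarrow> (\<exists>a b::real. \<forall>n. f n \<in> complex_of_real ` {a..b})"
  define \<alpha> where "\<alpha> = Inf (range (\<lambda>n. Re (f n)))"
  define \<beta> where "\<beta> = Sup (range (\<lambda>n. Re (f n)))"
  define fB where "fB = (if R then (\<lambda>n. clip \<alpha> \<beta> (fB0 n)) else fB0)"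
  have main: "fB \<in> Bes ?\<Psi> \<and> (\<lambda>n. f n - fB n) \<in> Bes_perp ?\<Psi>"
  proof (cases R)
    case False
    then show ?thesis unfolding fB_def using B0 A0 by simp
  next
    case True
    then obtain a b where ab: "\<And>n. f n \<in> complex_of_real ` {a..b}" unfolding R_def by blast
    have fr: "f n = complex_of_real (Re (f n))" for n using ab[of n] by auto
    have fab: "a \<le> Re (f n) \<and> Re (f n) \<le> b" for n using ab[of n] by auto
    have bdd1: "bdd_below (range (\<lambda>n. Re (f n)))" unfolding bdd_below_def using fab by (intro exI[of _ a]) auto
    have bdd2: "bdd_above (range (\<lambda>n. Re (f n)))" unfolding bdd_above_def using fab by (intro exI[of _ b]) auto
    have rng: "\<alpha> \<le> Re (f n) \<and> Re (f n) \<le> \<beta>" for n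
      unfolding \<alpha>_def \<beta>_def using bdd1 bdd2 by (auto intro: cInf_lower cSup_upper)
    let ?d = "\<lambda>n. fB0 n - clip \<alpha> \<beta> (fB0 n)"
    have null: "sqnorm ?\<Psi> ?d = 0" by (rule clip_null[OF fne B0 A0 fr rng])
    have "(\<lambda>n. fB0 n - ?d n) \<in> Bes ?\<Psi>" by (rule Bes_null_perturb[OF B0 null])
    moreover have "(\<lambda>n. (f n - fB0 n) + ?d n) \<in> Bes_perp ?\<Psi>" by (rule perp_null_perturb[OF fne A0 null])
    ultimately show ?thesis unfolding fB_def using True by (simp add: algebra_simps)
  qed
  have inter: "\<forall>a b::real. (\<forall>n. f n \<in> complex_of_real ` {a..b}) \<longrightarrow> (\<forall>n. fB n \<in> complex_of_real ` {a..b})"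
  proof (intro allI impI)
    fix a b :: real and m assume ab: "\<forall>n. f n \<in> complex_of_real ` {a..b}"
    then have R unfolding R_def by blast
    have fab: "a \<le> Re (f n) \<and> Re (f n) \<le> b" for n using ab[rule_format, of n] by auto
    have bdd1: "bdd_below (range (\<lambda>n. Re (f n)))" unfolding bdd_below_def using fab by (intro exI[of _ a]) auto
    have bdd2: "bdd_above (range (\<lambda>n. Re (f n)))" unfolding bdd_above_def using fab by (intro exI[of _ b]) auto
    have a1: "a \<le> \<alpha>" unfolding \<alpha>_def by (rule cINF_greatest) (use fab in auto)
    have b1: "\<beta> \<le> b" unfolding \<beta>_def by (rule cSUP_least) (use fab in auto)
    have ab0: "\<alpha> \<le> \<beta>" unfolding \<alpha>_def \<beta>_def
      using cInf_lower[OF rangeI bdd1, of 0] cSup_upper[OF rangeI bdd2, of 0] by linarith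
    have "max \<alpha> (min \<beta> (Re (fB0 m))) \<in> {a..b}" using a1 b1 ab0 by auto
    then show "fB m \<in> complex_of_real ` {a..b}" unfolding fB_def clip_def using \<open>R\<close> by simp
  qed
  have inf: "snorm ?\<Psi> (\<lambda>n. f n - fB n) = Inf {snorm ?\<Psi> (\<lambda>n. f n - g n) | g. g \<in> Bes ?\<Psi>}"
    using Inf_char[OF fne] main by blast
  have "f = (\<lambda>n. fB n + (f n - fB n))" by simp
  then show ?thesis using sm main inf inter by blast
qed

end
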